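(* In the setting of the theorem on differential equations for the conserved quantities (with $\widetilde H_0$, $\widetilde K_0$ as defined there and $g$ associated to $f$ via $B$), the functions $\widetilde H_0(\cdot,\varepsilon)$ and $\widetilde K_0(\cdot,\varepsilon)$ are in involution with respect to both brackets $\{F,G\}_J=(\nabla F)^TJ(x)\nabla G$ and $\{F,G\}_\Pi=(\nabla F)^T\Pi(x)\nabla G$, where $\Pi(x)=J(x)-\varepsilon^2J(x)\mathcal HJ(x)\mathcal HJ(x)$: that is, $\{\widetilde H_0,\widetilde K_0\}_J=0$ and $\{\widetilde H_0,\widetilde K_0\}_\Pi=0$.
   Context: Fix an integer $n\ge 2$. Points of $\mathbb R^{2n}$ are $x=(x_1,\dots,x_{2n})^{T}$; write $u=(x_1,\dots,x_n)^T$. Let $X(u)$ be the $n\times n$ matrix with entries $X(u)_{ij}=x_{k}$ where $k\in\{1,\dots,n\}$, $k\equiv i+j-1 \pmod n$, and let $J(x)=\begin{pmatrix}0&X(u)\\-X(u)&0\end{pmatrix}$. Let $\mathcal P$ be the $n\times n$ cyclic shift matrix ($\mathcal P_{i,i+1}=1$ for $1\le i\le n-1$, $\mathcal P_{n,1}=1$, all other entries $0$) and $A=\begin{pmatrix}\mathcal P&0\\0&\mathcal P\end{pmatrix}$. An admissible Hamiltonian is a homogeneous quadratic form $H(x)=\tfrac12 x^T\mathcal H x$ with a constant symmetric matrix $\mathcal H=\nabla^2H$ satisfying $A\mathcal H=\mathcal H A^T$; its Hamiltonian vector field is $f(x)=J(x)\nabla H(x)$. Associated vector fields: let $B=\sum_{i=0}^{n-1}\alpha_iA^i$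 with $\alpha_i\in\mathbb C$ and $B^2=I$; for an admissible $H_0$ with vector field $f$, put $K_0(x)=\tfrac12 x^T B\mathcal H x$ and $g=J\nabla K_0=B^Tf$. With $\mathcal K=B\mathcal H$, define $\widetilde H_0(x,\varepsilon)=x^T\mathcal H(I-\varepsilon^2(J(x)\mathcal H)^2)^{-1}x$ and $\widetilde K_0(x,\varepsilon)=x^T\mathcal K(I-\varepsilon^2(J(x)\mathcal K)^2)^{-1}x$. *)

theory Defs
  imports Complex_Main "Jordan_Normal_Form.Gauss_Jordan_Elimination"
begin

(* Indices are 0-based: coordinates x_0..x_{2n-1}; the paper's x_k is x $ (k-1). *)

(* X(u)_{ij} = x_k with k == i+j-1 (mod n) (1-based)  <=>  0-based entry (i,j) is x $ ((i+j) mod n) *)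
definition Xmat :: "nat \<Rightarrow> real vec \<Rightarrow> real mat" where
  "Xmat n x = mat n n (\<lambda>(i,j). x $ ((i + j) mod n))"

definition Jmat :: "nat \<Rightarrow> real vec \<Rightarrow> real mat" where
  "Jmat n x = four_block_mat (0\<^sub>m n n) (Xmat n x) (- Xmat n x) (0\<^sub>m n n)"

definition Pmat :: "nat \<Rightarrow> real mat" where
  "Pmat n = mat n n (\<lambda>(i,j). if j = (i + 1) mod n then 1 else 0)"

definition Amat :: "nat \<Rightarrow> real mat" where
  "Amat n = four_block_mat (Pmat n) (0\<^sub>m n n) (0\<^sub>m n n) (Pmat n)"

definition Bmat :: "nat \<Rightarrow> (nat \<Rightarrow> complex) \<Rightarrow> complex mat" where
  "Bmat n \<alpha> = foldr (\<lambda>i M. \<alpha> i \<cdot>\<^sub>m (map_mat complex_of_real (Amat n) ^\<^sub>m i) + M) [0..<n]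
                 (0\<^sub>m (2*n) (2*n))"

(* matrix inverse (meaningful when the matrix is invertible) *)
definition minv :: "complex mat \<Rightarrow> complex mat" where
  "minv M = the (mat_inverse M)"

definition cvec :: "real vec \<Rightarrow> complex vec" where
  "cvec x = map_vec complex_of_real x"

definition Jc :: "nat \<Rightarrow> real vec \<Rightarrow> complex mat" where
  "Jc n x = map_mat complex_of_real (Jmat n x)"

definition Dmat :: "nat \<Rightarrow> complex mat \<Rightarrow> real \<Rightarrow> real vec \<Rightarrow> complex mat" where
  "Dmat n M eps x = 1\<^sub>m (2*n) - (complex_of_real (eps^2)) \<cdot>\<^sub>m ((Jc n x * M) * (Jc n x * M))"

definition Qtilde :: "nat \<Rightarrow> complex mat \<Rightarrow> real \<Rightarrow> real vec \<Rightarrow> complex" where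
  "Qtilde n M eps x = cvec x \<bullet> ((M * minv (Dmat n M eps x)) *\<^sub>v cvec x)"

definition pderiv_at :: "nat \<Rightarrow> (real vec \<Rightarrow> complex) \<Rightarrow> real vec \<Rightarrow> nat \<Rightarrow> complex" where
  "pderiv_at N F x i = (THE d. ((\<lambda>t::real. F (x + t \<cdot>\<^sub>v unit_vec N i)) has_vector_derivative d) (at 0))"

definition grad :: "nat \<Rightarrow> (real vec \<Rightarrow> complex) \<Rightarrow> real vec \<Rightarrow> complex vec" where
  "grad N F x = vec N (\<lambda>i. pderiv_at N F x i)"

definition bracket :: "nat \<Rightarrow> complex mat \<Rightarrow> (real vec \<Rightarrow> complex) \<Rightarrow> (real vec \<Rightarrow> complex) \<Rightarrow> real vec \<Rightarrow> complex" where
  "bracket N M F G x = grad N F x \<bullet> (M *\<^sub>v grad N G x)"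

definition Pimat :: "nat \<Rightarrow> real mat \<Rightarrow> real \<Rightarrow> real vec \<Rightarrow> complex mat" where
  "Pimat n H eps x = map_mat complex_of_real
      (Jmat n x - (eps^2) \<cdot>\<^sub>m (Jmat n x * H * Jmat n x * H * Jmat n x))"

end

theory Submission
  imports Defs "Jordan_Normal_Form.Determinant"
begin


definition shf :: "nat \<Rightarrow> nat \<Rightarrow> nat" where
  "shf n i = (if i < n then Suc i mod n else n + Suc (i - n) mod n)"
definition shb :: "nat \<Rightarrow> nat \<Rightarrow> nat" where
  "shb n i = (if i < n then (i + n - 1) mod n else n + (i - n + n - 1) mod n)"

lemma shf_lt: assumes "i < 2*n" shows "shf n i < 2*n"
proof -
  have n: "0 < n" using assms by simp
  have a1: "Suc i mod n < n" and a2: "Suc (i-n) mod n < n" using n by simp_all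
  have b1: "Suc i mod n < 2*n" using a1 by linarith
  have b2: "n + Suc (i-n) mod n < 2*n" using a2 by linarith
  show ?thesis unfolding shf_def using b1 b2 by simp
qed
lemma shb_lt: assumes "i < 2*n" shows "shb n i < 2*n"
proof -
  have n: "0 < n" using assms by simp
  have a1: "(i + n - 1) mod n < n" and a2: "(i - n + n - 1) mod n < n" using n by simp_all
  have b1: "(i + n - 1) mod n < 2*n" using a1 by linarith
  have b2: "n + (i - n + n - 1) mod n < 2*n" using a2 by linarith
  show ?thesis unfolding shb_def using b1 b2 by simp
qed

lemma mod_pred_aux: assumes k: "k < n" and l: "l < n" shows "(k = Suc l mod n) = (l = (k + n - 1) mod n)"
proof -
  have km: "(k + n - 1) mod n = (if k = 0 then n - 1 else k - 1)"
  proof (cases "k = 0")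
    case True then show ?thesis using l by simp
  next
    case False
    then have "k + n - 1 = (k - 1) + n" by simp
    then have "(k + n - 1) mod n = (k - 1) mod n" by simp
    also have "\<dots> = k - 1" using k by simp
    finally show ?thesis using False by simp
  qed
  have sm: "Suc l mod n = (if Suc l = n then 0 else Suc l)"
    using l by (cases "Suc l = n") simp_all
  show ?thesis unfolding km sm using k l by (cases "k = 0"; cases "Suc l = n") auto
qed

lemma shf_shb: "i < 2*n \<Longrightarrow> k < 2*n \<Longrightarrow> (k = shf n i) = (i = shb n k)"
  unfolding shf_def shb_def
  apply (cases "i < n"; cases "k < n")
  using mod_pred_aux[of k n i] mod_pred_aux[of "k - n" n "i - n"]
  by (auto simp: less_diff_conv2)

lemma shf_shb_id: "i < 2*n \<Longrightarrow> shf n (shb n i) = i"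
  using shf_shb[of "shb n i" n i] shb_lt by auto
lemma shb_shf_id: "i < 2*n \<Longrightarrow> shb n (shf n i) = i"
  using shf_shb[of i n "shf n i"] shf_lt by auto

lemma Amat_carrier[simp]: "Amat n \<in> carrier_mat (2*n) (2*n)"
  unfolding Amat_def Pmat_def by auto

lemma Amat_index: "i < 2*n \<Longrightarrow> k < 2*n \<Longrightarrow> Amat n $$ (i,k) = (if k = shf n i then 1 else 0)"
  unfolding Amat_def Pmat_def shf_def
  by (auto simp: less_diff_conv2)

lemma Amat_dims[simp]: "dim_row (Amat n) = 2*n" "dim_col (Amat n) = 2*n"
  unfolding Amat_def Pmat_def by (auto simp: mult_2)
lemma Jmat_dims[simp]: "dim_row (Jmat n y) = 2*n" "dim_col (Jmat n y) = 2*n"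
  unfolding Jmat_def by (auto simp: mult_2)

lemma Xmat_carrier[simp]: "Xmat n y \<in> carrier_mat n n"
  unfolding Xmat_def by auto

lemma Jmat_carrier[simp]: "Jmat n y \<in> carrier_mat (2*n) (2*n)"
  unfolding Jmat_def by (auto simp: mult_2)

lemma Jmat_index: "i < 2*n \<Longrightarrow> j < 2*n \<Longrightarrow> Jmat n y $$ (i,j) =
   (if i < n then (if j < n then 0 else y $ ((i + (j - n)) mod n))
    else (if j < n then - (y $ ((i - n + j) mod n)) else 0))"
  unfolding Jmat_def Xmat_def by (auto simp: less_diff_conv2)

lemma mod_pred_eq: assumes i: "i < n" shows "((a + n - 1) mod n = i) = (a mod n = Suc i mod n)"
proof -
  have n: "0 < n" using i by simp
  have "(a mod n + (n - 1)) mod n = (a + (n-1)) mod n" by (simp add: mod_add_left_eq)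
  moreover have "a mod n + (n - 1) = a mod n + n - 1" "a + (n - 1) = a + n - 1" using n by auto
  ultimately have e: "(a mod n + n - 1) mod n = (a + n - 1) mod n" by simp
  have am: "a mod n < n" using n by simp
  have "(a mod n = Suc i mod n) = (i = (a mod n + n - 1) mod n)" by (rule mod_pred_aux[OF am i])
  also have "\<dots> = (i = (a + n - 1) mod n)" by (simp only: e)
  finally show ?thesis by blast
qed

abbreviation Ac :: "nat \<Rightarrow> complex mat" where "Ac n \<equiv> map_mat complex_of_real (Amat n)"

lemma Ac_carrier[simp]: "Ac n \<in> carrier_mat (2*n) (2*n)" by simp

lemma Jc_dims[simp]: "dim_row (Jc n y) = 2*n" "dim_col (Jc n y) = 2*n" unfolding Jc_def by simp_all

lemma Jc_carrier[simp]: "Jc n y \<in> carrier_mat (2*n) (2*n)" unfolding Jc_def by simp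

lemma Ac_index: "i < 2*n \<Longrightarrow> k < 2*n \<Longrightarrow> Ac n $$ (i,k) = (if k = shf n i then 1 else 0)"
  using Amat_index[of i n k] by simp

lemma Amat_index_col: "k < 2*n \<Longrightarrow> j < 2*n \<Longrightarrow> Amat n $$ (k,j) = (if k = shb n j then 1 else 0)"
  using Amat_index[of k n j] shf_shb[of k n j] by simp

lemma Ac_index_col: "k < 2*n \<Longrightarrow> j < 2*n \<Longrightarrow> Ac n $$ (k,j) = (if k = shb n j then 1 else 0)"
  using Amat_index_col[of k n j] by simp
lemma AcT_index_col: "k < 2*n \<Longrightarrow> j < 2*n \<Longrightarrow> (Ac n)\<^sup>T $$ (k,j) = (if k = shf n j then 1 else 0)"
  using Amat_index[of j n k] by simp

lemma AcT_index: "i < 2*n \<Longrightarrow> k < 2*n \<Longrightarrow> (Ac n)\<^sup>T $$ (i,k) = (if k = shb n i then 1 else 0)"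
  using Amat_index[of k n i] shf_shb[of k n i] by simp

lemma sum_single: assumes "a < (m::nat)" shows "(\<Sum>k\<in>{0..<m}. (if k = a then 1 else 0) * (f k :: complex)) = f a"
  "(\<Sum>k\<in>{0..<m}. f k * (if k = a then 1 else 0)) = (f a :: complex)"
proof -
  have "(\<Sum>k\<in>{0..<m}. (if k = a then 1 else 0) * (f k :: complex)) = (\<Sum>k\<in>{0..<m}. if k = a then f k else 0)"
    by (rule sum.cong) auto
  also have "\<dots> = f a" using assms by (subst sum.delta) auto
  finally show "(\<Sum>k\<in>{0..<m}. (if k = a then 1 else 0) * (f k :: complex)) = f a" .
  have "(\<Sum>k\<in>{0..<m}. f k * (if k = a then 1 else 0)) = (\<Sum>k\<in>{0..<m}. if k = a then f k else 0)"
    by (rule sum.cong) auto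
  also have "\<dots> = f a" using assms by (subst sum.delta) auto
  finally show "(\<Sum>k\<in>{0..<m}. f k * (if k = a then 1 else 0)) = (f a :: complex)" .
qed

lemma mult_index_sum: "A \<in> carrier_mat nr m \<Longrightarrow> B \<in> carrier_mat m nc \<Longrightarrow> i < nr \<Longrightarrow> j < nc \<Longrightarrow>
  (A * B) $$ (i,j) = (\<Sum>k\<in>{0..<m}. A $$ (i,k) * B $$ (k,j))"
  by (auto simp: scalar_prod_def intro!: sum.cong)

lemma mult_Ac_left: assumes M: "M \<in> carrier_mat (2*n) m" and i: "i < 2*n" and j: "j < m"
  shows "(Ac n * M) $$ (i,j) = M $$ (shf n i, j)"
proof -
  have "(Ac n * M) $$ (i,j) = (\<Sum>k\<in>{0..<2*n}. (if k = shf n i then 1 else 0) * M $$ (k,j))"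
    using mult_index_sum[OF Ac_carrier M i j] by (auto simp: Ac_index[OF i] intro!: sum.cong)
  also have "\<dots> = M $$ (shf n i, j)" by (rule sum_single(1)[OF shf_lt[OF i]])
  finally show ?thesis .
qed

lemma mult_AcT_left: assumes M: "M \<in> carrier_mat (2*n) m" and i: "i < 2*n" and j: "j < m"
  shows "((Ac n)\<^sup>T * M) $$ (i,j) = M $$ (shb n i, j)"
proof -
  have "((Ac n)\<^sup>T * M) $$ (i,j) = (\<Sum>k\<in>{0..<2*n}. (if k = shb n i then 1 else 0) * M $$ (k,j))"
    using mult_index_sum[OF _ M i j, of "(Ac n)\<^sup>T"] by (auto simp: AcT_index[OF i] intro!: sum.cong)
  also have "\<dots> = M $$ (shb n i, j)" by (rule sum_single(1)[OF shb_lt[OF i]])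
  finally show ?thesis .
qed

lemma mult_Ac_right: assumes M: "M \<in> carrier_mat m (2*n)" and i: "i < m" and j: "j < 2*n"
  shows "(M * Ac n) $$ (i,j) = M $$ (i, shb n j)"
proof -
  have "(M * Ac n) $$ (i,j) = (\<Sum>k\<in>{0..<2*n}. M $$ (i,k) * (if k = shb n j then 1 else 0))"
    using mult_index_sum[OF M Ac_carrier i j] j by (auto simp: Ac_index_col simp del: index_map_mat intro!: sum.cong)
  also have "\<dots> = M $$ (i, shb n j)" by (rule sum_single(2)[OF shb_lt[OF j]])
  finally show ?thesis .
qed

lemma mult_AcT_right: assumes M: "M \<in> carrier_mat m (2*n)" and i: "i < m" and j: "j < 2*n"
  shows "(M * (Ac n)\<^sup>T) $$ (i,j) = M $$ (i, shf n j)"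
proof -
  have "(M * (Ac n)\<^sup>T) $$ (i,j) = (\<Sum>k\<in>{0..<2*n}. M $$ (i,k) * (if k = shf n j then 1 else 0))"
    using mult_index_sum[OF M _ i j, of "(Ac n)\<^sup>T"] j by (auto simp: AcT_index_col simp del: index_map_mat index_transpose_mat intro!: sum.cong)
  also have "\<dots> = M $$ (i, shf n j)" by (rule sum_single(2)[OF shf_lt[OF j]])
  finally show ?thesis .
qed

lemma Jc_index: "i < 2*n \<Longrightarrow> j < 2*n \<Longrightarrow> Jc n y $$ (i,j) =
   (if i < n then (if j < n then 0 else complex_of_real (y $ ((i + (j - n)) mod n)))
    else (if j < n then - complex_of_real (y $ ((i - n + j) mod n)) else 0))"
  unfolding Jc_def using Jmat_index[of i n j y] by (auto simp: index_map_mat)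

lemma shb_low: "i < n \<Longrightarrow> shb n i = (i + n - 1) mod n" "i < n \<Longrightarrow> shb n i < n"
  unfolding shb_def by auto
lemma shb_high: "n \<le> i \<Longrightarrow> shb n i = n + (i - n + n - 1) mod n" "n \<le> i \<Longrightarrow> n \<le> shb n i"
  unfolding shb_def by auto

lemma AcT_Jc: "(Ac n)\<^sup>T * Jc n y = Jc n y * Ac n"
proof (rule eq_matI)
  fix i j assume "i < dim_row (Jc n y * Ac n)" "j < dim_col (Jc n y * Ac n)"
  then have i: "i < 2*n" and j: "j < 2*n" by auto
  have L: "((Ac n)\<^sup>T * Jc n y) $$ (i,j) = Jc n y $$ (shb n i, j)" by (rule mult_AcT_left[OF Jc_carrier i j])
  have R: "(Jc n y * Ac n) $$ (i,j) = Jc n y $$ (i, shb n j)" by (rule mult_Ac_right[OF Jc_carrier i j])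
  have n: "0 < n" using i by simp
  show "((Ac n)\<^sup>T * Jc n y) $$ (i,j) = (Jc n y * Ac n) $$ (i,j)"
    unfolding L R
  proof (cases "i < n"; cases "j < n")
    assume a: "i < n" "j < n"
    then show "Jc n y $$ (shb n i, j) = Jc n y $$ (i, shb n j)"
      using shb_low[of i n] shb_low[of j n] shb_lt[OF i] shb_lt[OF j] i j by (simp add: Jc_index)
  next
    assume a: "\<not> i < n" "\<not> j < n"
    then show "Jc n y $$ (shb n i, j) = Jc n y $$ (i, shb n j)"
      using shb_high[of n i] shb_high[of n j] shb_lt[OF i] shb_lt[OF j] i j by (simp add: Jc_index)
  next
    assume a: "i < n" "\<not> j < n"
    have e: "((i + n - 1) mod n + (j - n)) mod n = (i + (j - n + n - 1) mod n) mod n"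
    proof -
      have "((i + n - 1) mod n + (j - n)) mod n = (i + n - 1 + (j - n)) mod n" by (simp add: mod_add_left_eq)
      moreover have "(i + (j - n + n - 1) mod n) mod n = (i + (j - n + n - 1)) mod n" by (simp add: mod_add_right_eq)
      moreover have "i + n - 1 + (j - n) = i + (j - n + n - 1)" using n a by auto
      ultimately show ?thesis by simp
    qed
    show "Jc n y $$ (shb n i, j) = Jc n y $$ (i, shb n j)"
      using shb_low[of i n] shb_high[of n j] shb_lt[OF i] shb_lt[OF j] i j a e by (simp add: Jc_index)
  next
    assume a: "\<not> i < n" "j < n"
    have e: "((i - n + n - 1) mod n + j) mod n = (i - n + (j + n - 1) mod n) mod n"
    proof -
      have "((i - n + n - 1) mod n + j) mod n = (i - n + n - 1 + j) mod n" by (simp add: mod_add_left_eq)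
      moreover have "(i - n + (j + n - 1) mod n) mod n = (i - n + (j + n - 1)) mod n" by (simp add: mod_add_right_eq)
      moreover have "i - n + n - 1 + j = i - n + (j + n - 1)" using n a by auto
      ultimately show ?thesis by simp
    qed
    show "Jc n y $$ (shb n i, j) = Jc n y $$ (i, shb n j)"
      using shb_high[of n i] shb_low[of j n] shb_lt[OF i] shb_lt[OF j] i j a e by (simp add: Jc_index)
  qed
qed (auto simp: Jc_def)



abbreviation pfold :: "(nat \<Rightarrow> complex) \<Rightarrow> nat \<Rightarrow> nat list \<Rightarrow> complex mat \<Rightarrow> complex mat" where
  "pfold \<alpha> N xs X \<equiv> foldr (\<lambda>i M. \<alpha> i \<cdot>\<^sub>m (X ^\<^sub>m i) + M) xs (0\<^sub>m N N)"

lemma pfold_carrier: "X \<in> carrier_mat N N \<Longrightarrow> pfold \<alpha> N xs X \<in> carrier_mat N N"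
  by (induction xs) auto

lemma smult_mat_vec: "v \<in> carrier_vec nc \<Longrightarrow> A \<in> carrier_mat nr nc \<Longrightarrow> (k \<cdot>\<^sub>m A) *\<^sub>v v = (k::complex) \<cdot>\<^sub>v (A *\<^sub>v v)"
  by (rule eq_vecI) (auto simp: scalar_prod_def sum_distrib_left ac_simps intro!: sum.cong)

lemma transpose_smult: "transpose_mat (k \<cdot>\<^sub>m A) = k \<cdot>\<^sub>m transpose_mat A"
  by (rule eq_matI) auto

lemma pow_intertwine: assumes X: "X \<in> carrier_mat N N" and Y: "Y \<in> carrier_mat N N" and Z: "Z \<in> carrier_mat N N"
  and XZ: "X * Z = Z * Y" shows "X ^\<^sub>m k * Z = Z * Y ^\<^sub>m k"
proof (induction k)
  case 0 show ?case using X Y Z by simp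
next
  case (Suc k)
  have "X ^\<^sub>m Suc k * Z = X ^\<^sub>m k * (X * Z)" using assoc_mult_mat[OF pow_carrier_mat[OF X, of k] X Z] by simp
  also have "\<dots> = X ^\<^sub>m k * (Z * Y)" by (simp add: XZ)
  also have "\<dots> = (X ^\<^sub>m k * Z) * Y" using assoc_mult_mat[OF pow_carrier_mat[OF X, of k] Z Y] by simp
  also have "\<dots> = (Z * Y ^\<^sub>m k) * Y" by (simp add: Suc)
  also have "\<dots> = Z * Y ^\<^sub>m Suc k" using assoc_mult_mat[OF Z pow_carrier_mat[OF Y, of k] Y] by simp
  finally show ?case .
qed

lemma pfold_intertwine: assumes X: "X \<in> carrier_mat N N" and Y: "Y \<in> carrier_mat N N" and Z: "Z \<in> carrier_mat N N"
  and XZ: "X * Z = Z * Y" shows "pfold \<alpha> N xs X * Z = Z * pfold \<alpha> N xs Y"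
proof (induction xs)
  case Nil show ?case using Z by simp
next
  case (Cons a xs)
  have P: "pfold \<alpha> N xs X \<in> carrier_mat N N" using pfold_carrier[OF X] .
  have P': "pfold \<alpha> N xs Y \<in> carrier_mat N N" using pfold_carrier[OF Y] .
  have "pfold \<alpha> N (a#xs) X * Z = (\<alpha> a \<cdot>\<^sub>m X ^\<^sub>m a) * Z + pfold \<alpha> N xs X * Z"
    using add_mult_distrib_mat[OF _ P Z, of "\<alpha> a \<cdot>\<^sub>m X ^\<^sub>m a"] X by simp
  also have "\<dots> = \<alpha> a \<cdot>\<^sub>m (X ^\<^sub>m a * Z) + Z * pfold \<alpha> N xs Y"
    using mult_smult_assoc_mat[OF pow_carrier_mat[OF X] Z] Cons by simp
  also have "\<dots> = Z * (\<alpha> a \<cdot>\<^sub>m Y ^\<^sub>m a) + Z * pfold \<alpha> N xs Y"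
    using pow_intertwine[OF X Y Z XZ, of a] mult_smult_distrib[OF Z pow_carrier_mat[OF Y]] by simp
  also have "\<dots> = Z * pfold \<alpha> N (a#xs) Y"
    using mult_add_distrib_mat[OF Z _ P', of "\<alpha> a \<cdot>\<^sub>m Y ^\<^sub>m a"] Y by simp
  finally show ?case .
qed

lemma pow_transpose: assumes X: "(X :: complex mat) \<in> carrier_mat N N" shows "transpose_mat (X ^\<^sub>m k) = (transpose_mat X) ^\<^sub>m k"
proof (induction k)
  case 0 show ?case using X by simp
next
  case (Suc k)
  have c: "X * X ^\<^sub>m k = X ^\<^sub>m k * X" using pow_intertwine[OF X X X refl, of k] by simp
  have "transpose_mat (X ^\<^sub>m Suc k) = transpose_mat (X * X ^\<^sub>m k)" using c by simp
  also have "\<dots> = transpose_mat (X ^\<^sub>m k) * transpose_mat X" using transpose_mult[of X N N "X ^\<^sub>m k" N] X by simp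
  finally show ?case using Suc by simp
qed

lemma pfold_transpose: assumes X: "X \<in> carrier_mat N N"
  shows "transpose_mat (pfold \<alpha> N xs X) = pfold \<alpha> N xs (transpose_mat X)"
proof (induction xs)
  case Nil show ?case by simp
next
  case (Cons a xs)
  have P: "pfold \<alpha> N xs X \<in> carrier_mat N N" using pfold_carrier[OF X] .
  have "transpose_mat (pfold \<alpha> N (a#xs) X) = transpose_mat (\<alpha> a \<cdot>\<^sub>m X ^\<^sub>m a) + transpose_mat (pfold \<alpha> N xs X)"
    using transpose_add[OF _ P, of "\<alpha> a \<cdot>\<^sub>m X ^\<^sub>m a"] X by simp
  then show ?case using Cons pow_transpose[OF X] by (simp add: transpose_smult)
qed

lemma zero_mult_vec: "w \<in> carrier_vec N \<Longrightarrow> 0\<^sub>m N N *\<^sub>v w = (0\<^sub>v N :: complex vec)"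
  by (rule eq_vecI) (auto simp: scalar_prod_def)

lemma pfold_vec: assumes X: "X \<in> carrier_mat N N"
  and fadd: "\<And>u v. u \<in> carrier_vec N \<Longrightarrow> v \<in> carrier_vec N \<Longrightarrow> f (u + v) = f u + f v"
  and fsm: "\<And>c u. u \<in> carrier_vec N \<Longrightarrow> f (c \<cdot>\<^sub>v u) = c \<cdot>\<^sub>v f u"
  and fcar: "\<And>u. u \<in> carrier_vec N \<Longrightarrow> f u \<in> carrier_vec N"
  and fX: "\<And>u. u \<in> carrier_vec N \<Longrightarrow> f (X *\<^sub>v u) = X *\<^sub>v f u"
  and u: "u \<in> carrier_vec N"
  shows "f (pfold \<alpha> N xs X *\<^sub>v u) = pfold \<alpha> N xs X *\<^sub>v f u"
proof -
  have pw: "f (X ^\<^sub>m k *\<^sub>v w) = X ^\<^sub>m k *\<^sub>v f w" if w: "w \<in> carrier_vec N" for k w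
    using w
  proof (induction k arbitrary: w)
    case 0 then show ?case using X fcar by simp
  next
    case (Suc k)
    have "f (X ^\<^sub>m Suc k *\<^sub>v w) = f (X ^\<^sub>m k *\<^sub>v (X *\<^sub>v w))" using assoc_mult_mat_vec[OF pow_carrier_mat[OF X, of k] X Suc.prems] by simp
    also have "\<dots> = X ^\<^sub>m k *\<^sub>v f (X *\<^sub>v w)" using Suc.IH[OF mult_mat_vec_carrier[OF X Suc.prems]] by simp
    also have "\<dots> = X ^\<^sub>m k *\<^sub>v (X *\<^sub>v f w)" using fX[OF Suc.prems] by simp
    also have "\<dots> = X ^\<^sub>m Suc k *\<^sub>v f w" using assoc_mult_mat_vec[OF pow_carrier_mat[OF X, of k] X fcar[OF Suc.prems]] by simp
    finally show ?case .
  qed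
  have z: "f (0\<^sub>v N) = 0\<^sub>v N"
  proof -
    have zz: "0 \<cdot>\<^sub>v 0\<^sub>v N = (0\<^sub>v N :: complex vec)" by (rule eq_vecI) auto
    have "f (0\<^sub>v N) = f (0 \<cdot>\<^sub>v 0\<^sub>v N)" by (simp only: zz)
    also have "\<dots> = 0 \<cdot>\<^sub>v f (0\<^sub>v N)" by (rule fsm) simp
    also have "\<dots> = 0\<^sub>v N" using fcar[of "0\<^sub>v N"] by auto
    finally show ?thesis .
  qed
  show ?thesis
  proof (induction xs)
    case Nil show ?case using u z fcar[OF u] zero_mult_vec[OF u] zero_mult_vec[OF fcar[OF u]] by simp
  next
    case (Cons a xs)
    have P: "pfold \<alpha> N xs X \<in> carrier_mat N N" using pfold_carrier[OF X] .
    have e1: "pfold \<alpha> N (a#xs) X *\<^sub>v u = \<alpha> a \<cdot>\<^sub>v (X ^\<^sub>m a *\<^sub>v u) + pfold \<alpha> N xs X *\<^sub>v u"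
      using add_mult_distrib_mat_vec[OF _ P u, of "\<alpha> a \<cdot>\<^sub>m X ^\<^sub>m a"] X smult_mat_vec[OF u pow_carrier_mat[OF X]] by simp
    have e2: "pfold \<alpha> N (a#xs) X *\<^sub>v f u = \<alpha> a \<cdot>\<^sub>v (X ^\<^sub>m a *\<^sub>v f u) + pfold \<alpha> N xs X *\<^sub>v f u"
      using add_mult_distrib_mat_vec[OF _ P fcar[OF u], of "\<alpha> a \<cdot>\<^sub>m X ^\<^sub>m a"] X smult_mat_vec[OF fcar[OF u] pow_carrier_mat[OF X]] by simp
    show ?case unfolding e1 e2
      using fadd[of "\<alpha> a \<cdot>\<^sub>v (X ^\<^sub>m a *\<^sub>v u)" "pfold \<alpha> N xs X *\<^sub>v u"] fsm[of "X ^\<^sub>m a *\<^sub>v u" "\<alpha> a"]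
        pw[OF u, of a] Cons X P u mult_mat_vec_carrier[OF pow_carrier_mat[OF X] u, of a] by simp
  qed
qed

lemma Bmat_pfold: "Bmat n \<alpha> = pfold \<alpha> (2*n) [0..<n] (Ac n)"
  unfolding Bmat_def by simp

lemma Bmat_carrier[simp]: "Bmat n \<alpha> \<in> carrier_mat (2*n) (2*n)"
  unfolding Bmat_pfold by (rule pfold_carrier) simp

lemma BmatT: "transpose_mat (Bmat n \<alpha>) = pfold \<alpha> (2*n) [0..<n] (transpose_mat (Ac n))"
  unfolding Bmat_pfold by (rule pfold_transpose) simp

lemma Ac_intertwine_T: assumes Z: "Z \<in> carrier_mat (2*n) (2*n)" and AZ: "Ac n * Z = Z * transpose_mat (Ac n)"
  shows "transpose_mat (Ac n) * Z = Z * Ac n"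
proof (rule eq_matI)
  fix i j assume "i < dim_row (Z * Ac n)" "j < dim_col (Z * Ac n)"
  then have i: "i < 2*n" and j: "j < 2*n" using Z by auto
  have rel: "Z $$ (shf n a, b) = Z $$ (a, shf n b)" if "a < 2*n" "b < 2*n" for a b
  proof -
    have "(Ac n * Z) $$ (a,b) = (Z * transpose_mat (Ac n)) $$ (a,b)" using AZ by simp
    then show ?thesis using mult_Ac_left[OF Z that] mult_AcT_right[OF Z that] by simp
  qed
  have "Z $$ (shb n i, j) = Z $$ (i, shb n j)"
    using rel[OF shb_lt[OF i] shb_lt[OF j]] shf_shb_id[OF i] shf_shb_id[OF j] by simp
  then show "(transpose_mat (Ac n) * Z) $$ (i,j) = (Z * Ac n) $$ (i,j)"
    using mult_AcT_left[OF Z i j] mult_Ac_right[OF Z i j] by simp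
qed (use Z in auto)

lemma Ac_mult_vec: "v \<in> carrier_vec (2*n) \<Longrightarrow> i < 2*n \<Longrightarrow> (Ac n *\<^sub>v v) $ i = v $ shf n i"
proof -
  assume v: "v \<in> carrier_vec (2*n)" and i: "i < 2*n"
  have "(Ac n *\<^sub>v v) $ i = row (Ac n) i \<bullet> v" using i by simp
  also have "\<dots> = (\<Sum>k\<in>{0..<2*n}. row (Ac n) i $ k * v $ k)" using v by (simp add: scalar_prod_def)
  also have "\<dots> = (\<Sum>k\<in>{0..<2*n}. (if k = shf n i then 1 else 0) * v $ k)"
    using i by (intro sum.cong refl) (simp add: Amat_index)
  also have "\<dots> = v $ shf n i" by (rule sum_single(1)[OF shf_lt[OF i]])
  finally show ?thesis .
qed

lemma Jc_unit_shift: assumes i: "i < 2*n"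
  shows "Jc n (unit_vec (2*n) (shf n i)) = Jc n (unit_vec (2*n) i) * Ac n"
proof (rule eq_matI)
  fix r s assume "r < dim_row (Jc n (unit_vec (2*n) i) * Ac n)" "s < dim_col (Jc n (unit_vec (2*n) i) * Ac n)"
  then have r: "r < 2*n" and s: "s < 2*n" by auto
  have n: "0 < n" using i by simp
  have R: "(Jc n (unit_vec (2*n) i) * Ac n) $$ (r,s) = Jc n (unit_vec (2*n) i) $$ (r, shb n s)"
    by (rule mult_Ac_right[OF Jc_carrier r s])
  have key: "(c mod n = shf n i) = ((c + n - 1) mod n = i)" for c
  proof (cases "i < n")
    case True
    then show ?thesis using mod_pred_eq[OF True, of c] unfolding shf_def by auto
  next
    case False
    have a1: "c mod n < n" and a2: "(c + n - 1) mod n < n" using n by auto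
    have a3: "shf n i \<ge> n" using False unfolding shf_def by simp
    have "c mod n \<noteq> shf n i" using a1 a3 by linarith
    moreover have "(c + n - 1) mod n \<noteq> i" using a2 False by linarith
    ultimately show ?thesis by blast
  qed
  show "Jc n (unit_vec (2*n) (shf n i)) $$ (r,s) = (Jc n (unit_vec (2*n) i) * Ac n) $$ (r,s)"
    unfolding R
  proof (cases "r < n"; cases "s < n")
    assume a: "r < n" "s < n"
    then show "Jc n (unit_vec (2*n) (shf n i)) $$ (r,s) = Jc n (unit_vec (2*n) i) $$ (r, shb n s)"
      using shb_low[of s n] shb_lt[OF s] r s by (simp add: Jc_index)
  next
    assume a: "\<not> r < n" "\<not> s < n"
    then show "Jc n (unit_vec (2*n) (shf n i)) $$ (r,s) = Jc n (unit_vec (2*n) i) $$ (r, shb n s)"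
      using shb_high[of n s] shb_lt[OF s] r s by (simp add: Jc_index)
  next
    assume a: "r < n" "\<not> s < n"
    have m1: "(r + (s - n)) mod n < 2*n" "(r + (shb n s - n)) mod n < 2*n"
      using mod_less_divisor[OF n, of "r+(s-n)"] mod_less_divisor[OF n, of "r + (shb n s - n)"] by linarith+
    have e: "(r + (shb n s - n)) mod n = (r + (s - n) + n - 1) mod n"
    proof -
      have "(r + (shb n s - n)) mod n = (r + (s - n + n - 1) mod n) mod n" using shb_high[of n s] a by simp
      also have "\<dots> = (r + (s - n + n - 1)) mod n" by (simp add: mod_add_right_eq)
      also have "r + (s - n + n - 1) = r + (s - n) + n - 1" using n by simp
      finally show ?thesis .
    qed
    show "Jc n (unit_vec (2*n) (shf n i)) $$ (r,s) = Jc n (unit_vec (2*n) i) $$ (r, shb n s)"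
      using shb_high[of n s] shb_lt[OF s] r s a m1 e key[of "r + (s - n)"] by (simp add: Jc_index unit_vec_def)
  next
    assume a: "\<not> r < n" "s < n"
    have m1: "(r - n + s) mod n < 2*n" "(r - n + shb n s) mod n < 2*n"
      using mod_less_divisor[OF n, of "r - n + s"] mod_less_divisor[OF n, of "r - n + shb n s"] by linarith+
    have e: "(r - n + shb n s) mod n = (r - n + s + n - 1) mod n"
    proof -
      have "(r - n + shb n s) mod n = (r - n + (s + n - 1) mod n) mod n" using shb_low[of s n] a by simp
      also have "\<dots> = (r - n + (s + n - 1)) mod n" by (simp add: mod_add_right_eq)
      also have "r - n + (s + n - 1) = r - n + s + n - 1" using n by simp
      finally show ?thesis .
    qed
    show "Jc n (unit_vec (2*n) (shf n i)) $$ (r,s) = Jc n (unit_vec (2*n) i) $$ (r, shb n s)"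
      using shb_low[of s n] shb_lt[OF s] r s a m1 e key[of "r - n + s"] by (simp add: Jc_index unit_vec_def)
  qed
qed auto



definition Gam :: "nat \<Rightarrow> complex vec \<Rightarrow> complex vec \<Rightarrow> complex vec" where
  "Gam n p q = vec (2*n) (\<lambda>i. p \<bullet> (Jc n (unit_vec (2*n) i) *\<^sub>v q))"

lemma Gam_carrier[simp]: "Gam n p q \<in> carrier_vec (2*n)"
  unfolding Gam_def by simp

lemma sq_mv_carrier[simp]: "A \<in> carrier_mat N N \<Longrightarrow> u \<in> carrier_vec N \<Longrightarrow> A *\<^sub>v u \<in> carrier_vec N"
  by simp

lemma Gam_dim[simp]: "dim_vec (Gam n p q) = 2*n"
  unfolding Gam_def by simp

lemma Gam_add: assumes p: "p \<in> carrier_vec (2*n)" and u: "u \<in> carrier_vec (2*n)" and v: "v \<in> carrier_vec (2*n)"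
  shows "Gam n p (u + v) = Gam n p u + Gam n p v"
proof (rule eq_vecI)
  fix i assume "i < dim_vec (Gam n p u + Gam n p v)"
  then have i: "i < 2*n" by simp
  let ?J = "Jc n (unit_vec (2*n) i)"
  have "p \<bullet> (?J *\<^sub>v (u + v)) = p \<bullet> (?J *\<^sub>v u + ?J *\<^sub>v v)"
    using mult_add_distrib_mat_vec[OF Jc_carrier u v] by simp
  also have "\<dots> = p \<bullet> (?J *\<^sub>v u) + p \<bullet> (?J *\<^sub>v v)"
    by (rule scalar_prod_add_distrib[OF p]) (use u v in auto)
  finally show "Gam n p (u + v) $ i = (Gam n p u + Gam n p v) $ i"
    unfolding Gam_def using i by simp
qed simp

lemma Gam_smult: "p \<in> carrier_vec (2*n) \<Longrightarrow> u \<in> carrier_vec (2*n) \<Longrightarrow>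
  Gam n p (c \<cdot>\<^sub>v u) = c \<cdot>\<^sub>v Gam n p u"
  unfolding Gam_def
  by (rule eq_vecI) (auto simp: mult_mat_vec[OF Jc_carrier])

lemma Gam_Ac: assumes p: "p \<in> carrier_vec (2*n)" and q: "q \<in> carrier_vec (2*n)"
  shows "Gam n p (Ac n *\<^sub>v q) = Ac n *\<^sub>v Gam n p q"
proof (rule eq_vecI)
  fix i assume "i < dim_vec (Ac n *\<^sub>v Gam n p q)"
  then have i: "i < 2*n" by simp
  have "Gam n p (Ac n *\<^sub>v q) $ i = p \<bullet> (Jc n (unit_vec (2*n) i) *\<^sub>v (Ac n *\<^sub>v q))"
    unfolding Gam_def using i by simp
  also have "\<dots> = p \<bullet> ((Jc n (unit_vec (2*n) i) * Ac n) *\<^sub>v q)"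
    using assoc_mult_mat_vec[OF Jc_carrier Ac_carrier q] by simp
  also have "\<dots> = p \<bullet> (Jc n (unit_vec (2*n) (shf n i)) *\<^sub>v q)"
    using Jc_unit_shift[OF i] by simp
  also have "\<dots> = Gam n p q $ shf n i" unfolding Gam_def using shf_lt[OF i] by simp
  also have "\<dots> = (Ac n *\<^sub>v Gam n p q) $ i" using Ac_mult_vec[OF Gam_carrier i] by simp
  finally show "Gam n p (Ac n *\<^sub>v q) $ i = (Ac n *\<^sub>v Gam n p q) $ i" .
qed simp

lemma Gam_B_right: assumes p: "p \<in> carrier_vec (2*n)" and q: "q \<in> carrier_vec (2*n)"
  shows "Gam n p (Bmat n \<alpha> *\<^sub>v q) = Bmat n \<alpha> *\<^sub>v Gam n p q"
  unfolding Bmat_pfold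
  by (rule pfold_vec[where f = "Gam n p"]) (use p q Gam_add Gam_smult Gam_Ac in auto)

lemma BmatT': "transpose_mat (pfold \<alpha> (2*n) [0..<n] (Ac n)) = pfold \<alpha> (2*n) [0..<n] (transpose_mat (Ac n))"
  by (rule pfold_transpose) simp

lemma BT_J: "transpose_mat (Bmat n \<alpha>) * Jc n y = Jc n y * Bmat n \<alpha>"
  unfolding Bmat_pfold BmatT'
  by (rule pfold_intertwine) (auto simp: AcT_Jc)

lemma Gam_B_left: assumes p: "p \<in> carrier_vec (2*n)" and q: "q \<in> carrier_vec (2*n)"
  shows "Gam n (Bmat n \<alpha> *\<^sub>v p) q = Gam n p (Bmat n \<alpha> *\<^sub>v q)"
proof (rule eq_vecI)
  fix i assume "i < dim_vec (Gam n p (Bmat n \<alpha> *\<^sub>v q))"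
  then have i: "i < 2*n" by simp
  let ?B = "Bmat n \<alpha>" and ?J = "Jc n (unit_vec (2*n) i)"
  have "(?B *\<^sub>v p) \<bullet> (?J *\<^sub>v q) = p \<bullet> (transpose_mat ?B *\<^sub>v (?J *\<^sub>v q))"
    using transpose_vec_mult_scalar[of "transpose_mat ?B" "2*n" "2*n" "?J *\<^sub>v q" p] p q by simp
  also have "\<dots> = p \<bullet> ((transpose_mat ?B * ?J) *\<^sub>v q)"
    using assoc_mult_mat_vec[of "transpose_mat ?B" "2*n" "2*n" ?J "2*n" q] q by simp
  also have "\<dots> = p \<bullet> ((?J * ?B) *\<^sub>v q)" by (simp add: BT_J)
  also have "\<dots> = p \<bullet> (?J *\<^sub>v (?B *\<^sub>v q))"
    using assoc_mult_mat_vec[of ?J "2*n" "2*n" ?B "2*n" q] q by simp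
  finally show "Gam n (Bmat n \<alpha> *\<^sub>v p) q $ i = Gam n p (Bmat n \<alpha> *\<^sub>v q) $ i"
    unfolding Gam_def using i by simp
qed simp

lemma Hc_rel: assumes Hdim: "H \<in> carrier_mat (2*n) (2*n)" and Hadm: "Amat n * H = H * transpose_mat (Amat n)"
  shows "Ac n * map_mat complex_of_real H = map_mat complex_of_real H * transpose_mat (Ac n)"
proof -
  have "Ac n * map_mat complex_of_real H = map_mat complex_of_real (Amat n * H)"
    by (rule of_real_hom.mat_hom_mult[OF Amat_carrier Hdim, symmetric])
  also have "\<dots> = map_mat complex_of_real (H * transpose_mat (Amat n))" by (simp add: Hadm)
  also have "\<dots> = map_mat complex_of_real H * transpose_mat (Ac n)"
    using of_real_hom.mat_hom_mult[OF Hdim, of "transpose_mat (Amat n)" "2*n"] by (simp add: map_mat_transpose)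
  finally show ?thesis .
qed

lemma B_H: assumes Hdim: "H \<in> carrier_mat (2*n) (2*n)" and Hadm: "Amat n * H = H * transpose_mat (Amat n)"
  shows "Bmat n \<alpha> * map_mat complex_of_real H = map_mat complex_of_real H * transpose_mat (Bmat n \<alpha>)"
  unfolding Bmat_pfold BmatT'
  by (rule pfold_intertwine) (use Hdim Hc_rel[OF Hdim Hadm] in auto)

lemma BT_H: assumes Hdim: "H \<in> carrier_mat (2*n) (2*n)" and Hadm: "Amat n * H = H * transpose_mat (Amat n)"
  shows "transpose_mat (Bmat n \<alpha>) * map_mat complex_of_real H = map_mat complex_of_real H * Bmat n \<alpha>"
  unfolding Bmat_pfold BmatT'
  by (rule pfold_intertwine) (use Hdim Ac_intertwine_T[OF _ Hc_rel[OF Hdim Hadm]] in auto)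

lemma antisym_zero: assumes S: "S \<in> carrier_mat N N" and ST: "transpose_mat S = - S" and v: "v \<in> carrier_vec N"
  shows "v \<bullet> (S *\<^sub>v v) = (0::complex)"
proof -
  have "(transpose_mat S *\<^sub>v v) \<bullet> v = v \<bullet> (S *\<^sub>v v)" by (rule transpose_vec_mult_scalar[OF S v v])
  moreover have "(transpose_mat S *\<^sub>v v) \<bullet> v = - ((S *\<^sub>v v) \<bullet> v)" using ST S v by simp
  moreover have "(S *\<^sub>v v) \<bullet> v = v \<bullet> (S *\<^sub>v v)" by (rule comm_scalar_prod[of _ N]) (use S v in auto)
  ultimately show ?thesis by simp
qed

lemma Jc_transpose: "transpose_mat (Jc n y) = - Jc n y"
proof (rule eq_matI)
  fix i j assume "i < dim_row (- Jc n y)" "j < dim_col (- Jc n y)"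
  then have i: "i < 2*n" and j: "j < 2*n" by auto
  show "transpose_mat (Jc n y) $$ (i,j) = (- Jc n y) $$ (i,j)"
    using i j by (auto simp: Jc_index ac_simps)
qed auto

lemma sq_mm_carrier[simp]: "A \<in> carrier_mat N N \<Longrightarrow> B \<in> carrier_mat N N \<Longrightarrow> A * B \<in> carrier_mat N N"
  by simp

definition gradF :: "complex mat \<Rightarrow> complex mat \<Rightarrow> complex mat \<Rightarrow> complex vec \<Rightarrow> complex
   \<Rightarrow> (complex vec \<Rightarrow> complex vec \<Rightarrow> complex vec) \<Rightarrow> complex vec" where
  "gradF M G J X c Gm = (M * G) *\<^sub>v X + transpose_mat (M * G) *\<^sub>v X
     + c \<cdot>\<^sub>v (Gm (transpose_mat (M * G) *\<^sub>v X) ((M * J * M * G) *\<^sub>v X)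
              + Gm (transpose_mat (M * G * J * M) *\<^sub>v X) ((M * G) *\<^sub>v X))"

lemma grad_rel:
  fixes B BT H J G :: "complex mat" and X :: "complex vec" and c :: complex
    and Gm :: "complex vec \<Rightarrow> complex vec \<Rightarrow> complex vec"
  assumes cB: "B \<in> carrier_mat N N" and cBT: "BT \<in> carrier_mat N N" and cH: "H \<in> carrier_mat N N"
    and cJ: "J \<in> carrier_mat N N" and cG: "G \<in> carrier_mat N N" and X: "X \<in> carrier_vec N"
    and BT: "transpose_mat B = BT" and BH: "B * H = H * BT" and BTJ: "BT * J = J * B"
    and BB: "B * B = 1\<^sub>m N" and GB: "G * BT = BT * G"
    and Gr: "\<And>p q. p \<in> carrier_vec N \<Longrightarrow> q \<in> carrier_vec N \<Longrightarrow> Gm p (B *\<^sub>v q) = B *\<^sub>v Gm p q"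
    and Gl: "\<And>p q. p \<in> carrier_vec N \<Longrightarrow> q \<in> carrier_vec N \<Longrightarrow> Gm (B *\<^sub>v p) q = Gm p (B *\<^sub>v q)"
    and Gc: "\<And>p q. Gm p q \<in> carrier_vec N"
  shows "gradF (B * H) G J X c Gm = B *\<^sub>v gradF H G J X c Gm"
proof -
  have as: "\<And>P Q R. P \<in> carrier_mat N N \<Longrightarrow> Q \<in> carrier_mat N N \<Longrightarrow> R \<in> carrier_mat N N \<Longrightarrow> P * Q * R = P * (Q * R)"
    by simp
  have asv: "\<And>P Q v. P \<in> carrier_mat N N \<Longrightarrow> Q \<in> carrier_mat N N \<Longrightarrow> v \<in> carrier_vec N \<Longrightarrow> (P * Q) *\<^sub>v v = P *\<^sub>v (Q *\<^sub>v v)"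
    by simp
  have BH': "\<And>Z. Z \<in> carrier_mat N N \<Longrightarrow> B * (H * Z) = H * (BT * Z)"
    using BH as cB cH cBT by (metis)
  have BTJ': "\<And>Z. Z \<in> carrier_mat N N \<Longrightarrow> BT * (J * Z) = J * (B * Z)"
    using BTJ as cB cJ cBT by (metis)
  have BB': "\<And>Z. Z \<in> carrier_mat N N \<Longrightarrow> B * (B * Z) = Z"
    using BB as cB by (metis left_mult_one_mat)
  have GB': "\<And>Z. Z \<in> carrier_mat N N \<Longrightarrow> G * (BT * Z) = BT * (G * Z)"
    using GB as cG cBT by (metis)
  have GB2: "\<And>Z. Z \<in> carrier_mat N N \<Longrightarrow> BT * (G * Z) = G * (BT * Z)"
    using GB' by metis
  have BTT: "transpose_mat BT = B" using BT by auto
  let ?W = "H * G"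
  have cW: "?W \<in> carrier_mat N N" using cH cG by simp
  have e2: "B * ?W = ?W * BT"
  proof -
    have "B * ?W = H * (BT * G)" using BH' cG by simp
    also have "\<dots> = H * (G * BT)" using GB by simp
    also have "\<dots> = ?W * BT" using as[OF cH cG cBT] by simp
    finally show ?thesis .
  qed
  have T1: "(B * H * G) *\<^sub>v X = B *\<^sub>v (?W *\<^sub>v X)"
    using as[OF cB cH cG] asv[OF cB cW X] by simp
  have T2: "transpose_mat (B * H * G) *\<^sub>v X = B *\<^sub>v (transpose_mat ?W *\<^sub>v X)"
  proof -
    have "transpose_mat (B * H * G) = transpose_mat (?W * BT)" using as[OF cB cH cG] e2 by simp
    also have "\<dots> = B * transpose_mat ?W" using transpose_mult[OF cW cBT] BTT by simp
    finally show ?thesis using asv[of B "transpose_mat ?W" X] cB cW X by simp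
  qed
  have T3: "(B * H * J * (B * H) * G) *\<^sub>v X = (H * J * H * G) *\<^sub>v X"
  proof -
    have "B * H * J * (B * H) * G = H * J * H * G"
      using cB cH cJ cG cBT by (simp add: as BH' BTJ' BB')
    then show ?thesis by simp
  qed
  have T4: "transpose_mat (B * H * G * J * (B * H)) *\<^sub>v X = transpose_mat (H * G * J * H) *\<^sub>v X"
  proof -
    have "B * H * G * J * (B * H) = H * G * J * H"
      using cB cH cJ cG cBT by (simp add: as BH' BTJ' BB' GB2)
    then show ?thesis by simp
  qed
  let ?p = "transpose_mat ?W *\<^sub>v X" and ?q = "(H * J * H * G) *\<^sub>v X"
    and ?r = "transpose_mat (H * G * J * H) *\<^sub>v X" and ?s = "?W *\<^sub>v X"
  have cp: "?p \<in> carrier_vec N" and cq: "?q \<in> carrier_vec N" and cr: "?r \<in> carrier_vec N" and cs: "?s \<in> carrier_vec N"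
    using cW cH cJ cG X by auto
  have "gradF (B * H) G J X c Gm = B *\<^sub>v ?s + B *\<^sub>v ?p + c \<cdot>\<^sub>v (Gm (B *\<^sub>v ?p) ?q + Gm ?r (B *\<^sub>v ?s))"
    unfolding gradF_def T1 T2 T3 T4 using T1 by simp
  also have "\<dots> = B *\<^sub>v ?s + B *\<^sub>v ?p + c \<cdot>\<^sub>v (B *\<^sub>v Gm ?p ?q + B *\<^sub>v Gm ?r ?s)"
    using Gl[OF cp cq] Gr[OF cp cq] Gr[OF cr cs] by simp
  also have "\<dots> = B *\<^sub>v (?s + ?p + c \<cdot>\<^sub>v (Gm ?p ?q + Gm ?r ?s))"
  proof -
    have g1: "Gm ?p ?q \<in> carrier_vec N" and g2: "Gm ?r ?s \<in> carrier_vec N" using Gc by auto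
    have "B *\<^sub>v (?s + ?p + c \<cdot>\<^sub>v (Gm ?p ?q + Gm ?r ?s)) = B *\<^sub>v (?s + ?p) + B *\<^sub>v (c \<cdot>\<^sub>v (Gm ?p ?q + Gm ?r ?s))"
      by (rule mult_add_distrib_mat_vec[OF cB]) (use cs cp g1 g2 in auto)
    also have "B *\<^sub>v (?s + ?p) = B *\<^sub>v ?s + B *\<^sub>v ?p" by (rule mult_add_distrib_mat_vec[OF cB cs cp])
    also have "B *\<^sub>v (c \<cdot>\<^sub>v (Gm ?p ?q + Gm ?r ?s)) = c \<cdot>\<^sub>v (B *\<^sub>v (Gm ?p ?q + Gm ?r ?s))"
      by (rule mult_mat_vec[OF cB]) (use g1 g2 in auto)
    also have "B *\<^sub>v (Gm ?p ?q + Gm ?r ?s) = B *\<^sub>v Gm ?p ?q + B *\<^sub>v Gm ?r ?s"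
      by (rule mult_add_distrib_mat_vec[OF cB g1 g2])
    finally show ?thesis by simp
  qed
  also have "\<dots> = B *\<^sub>v gradF H G J X c Gm"
    unfolding gradF_def by simp
  finally show ?thesis .
qed

lemma bracket_zero_gen:
  fixes S B BT :: "complex mat" and g :: "complex vec"
  assumes cS: "S \<in> carrier_mat N N" and cB: "B \<in> carrier_mat N N" and cBT: "BT \<in> carrier_mat N N"
    and ST: "transpose_mat S = - S" and BT: "transpose_mat B = BT" and BTS: "BT * S = S * B"
    and g: "g \<in> carrier_vec N"
  shows "g \<bullet> (S *\<^sub>v (B *\<^sub>v g)) = 0"
proof -
  have "transpose_mat (S * B) = BT * transpose_mat S" using transpose_mult[OF cS cB] BT by simp
  also have "\<dots> = - (S * B)" using ST BTS uminus_mult_right_mat[of BT S] cS cBT by simp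
  finally have a: "transpose_mat (S * B) = - (S * B)" .
  have "g \<bullet> ((S * B) *\<^sub>v g) = 0" by (rule antisym_zero[OF _ a g]) (use cS cB in simp)
  then show ?thesis using assoc_mult_mat_vec[OF cS cB g] by simp
qed



definition mdiff :: "(real \<Rightarrow> complex mat) \<Rightarrow> nat \<Rightarrow> bool" where
  "mdiff F N \<equiv> (\<forall>t. F t \<in> carrier_mat N N) \<and> (\<forall>i<N. \<forall>j<N. (\<lambda>t. F t $$ (i,j)) differentiable (at 0))"

lemma differentiable_prod_at:
  fixes f :: "'b \<Rightarrow> real \<Rightarrow> complex"
  assumes "finite S" "\<forall>a\<in>S. f a differentiable (at 0)"
  shows "(\<lambda>t. \<Prod>a\<in>S. f a t) differentiable (at 0)"
  using assms
proof (induction S rule: finite_induct)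
  case empty then show ?case by simp
next
  case (insert a S)
  then show ?case by (simp add: differentiable_mult)
qed

lemma det_differentiable: assumes F: "mdiff F N" shows "(\<lambda>t. det (F t)) differentiable (at 0)"
proof -
  have c: "\<And>t. F t \<in> carrier_mat N N" using F unfolding mdiff_def by auto
  have e: "(\<lambda>t. det (F t)) = (\<lambda>t. \<Sum>p\<in>{p. p permutes {0..<N}}. signof p * (\<Prod>i=0..<N. F t $$ (i, p i)))"
    using det_def'[OF c] by auto
  have "(\<lambda>t. \<Sum>p\<in>{p. p permutes {0..<N}}. signof p * (\<Prod>i=0..<N. F t $$ (i, p i))) differentiable (at 0)"
  proof (rule differentiable_sum)
    show "finite {p. p permutes {0..<N}}" by (rule finite_permutations) simp
    show "\<forall>p\<in>{p. p permutes {0..<N}}. (\<lambda>t. signof p * (\<Prod>i=0..<N. F t $$ (i, p i))) differentiable (at 0)"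
    proof
      fix p assume "p \<in> {p. p permutes {0..<N}}"
      then have p: "p permutes {0..<N}" by simp
      have "\<forall>i\<in>{0..<N}. (\<lambda>t. F t $$ (i, p i)) differentiable (at 0)"
        using F p permutes_in_image[OF p] unfolding mdiff_def by auto
      then have "(\<lambda>t. \<Prod>i=0..<N. F t $$ (i, p i)) differentiable (at 0)"
        by (intro differentiable_prod_at) auto
      then show "(\<lambda>t. signof p * (\<Prod>i=0..<N. F t $$ (i, p i))) differentiable (at 0)"
        by (intro differentiable_mult differentiable_const)
    qed
  qed
  then show ?thesis using e by simp
qed

lemma mdiff_delete: assumes F: "mdiff F N" shows "mdiff (\<lambda>t. mat_delete (F t) a b) (N - 1)"
  unfolding mdiff_def
proof (intro conjI allI impI)
  have c: "\<And>t. F t \<in> carrier_mat N N" using F unfolding mdiff_def by auto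
  show "\<And>t. mat_delete (F t) a b \<in> carrier_mat (N - 1) (N - 1)" using mat_delete_carrier[OF c] by simp
  fix i j assume i: "i < N - 1" and j: "j < N - 1"
  have e: "(\<lambda>t. mat_delete (F t) a b $$ (i,j)) = (\<lambda>t. F t $$ (if i < a then i else Suc i, if j < b then j else Suc j))"
  proof (rule ext)
    fix t show "mat_delete (F t) a b $$ (i,j) = F t $$ (if i < a then i else Suc i, if j < b then j else Suc j)"
      using c[of t] i j unfolding mat_delete_def by auto
  qed
  have "(if i < a then i else Suc i) < N" "(if j < b then j else Suc j) < N" using i j by auto
  then show "(\<lambda>t. mat_delete (F t) a b $$ (i,j)) differentiable (at 0)"
    unfolding e using F unfolding mdiff_def by auto
qed

lemma adj_entry_differentiable: assumes F: "mdiff F N" and i: "i < N" and j: "j < N"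
  shows "(\<lambda>t. adj_mat (F t) $$ (i,j)) differentiable (at 0)"
proof -
  have c: "\<And>t. F t \<in> carrier_mat N N" using F unfolding mdiff_def by auto
  have e: "(\<lambda>t. adj_mat (F t) $$ (i,j)) = (\<lambda>t. (-1)^(j+i) * det (mat_delete (F t) j i))"
  proof (rule ext)
    fix t show "adj_mat (F t) $$ (i,j) = (-1)^(j+i) * det (mat_delete (F t) j i)"
      using c[of t] i j unfolding adj_mat_def cofactor_def by auto
  qed
  show ?thesis unfolding e
    by (intro differentiable_mult differentiable_const det_differentiable[OF mdiff_delete[OF F]])
qed

definition ginv :: "complex mat \<Rightarrow> complex mat" where
  "ginv D = (1 / det D) \<cdot>\<^sub>m adj_mat D"

lemma ginv_carrier: assumes D: "D \<in> carrier_mat N N" shows "ginv D \<in> carrier_mat N N"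
  unfolding ginv_def using adj_mat(1)[OF D] by simp

lemma mdiff_ginv: assumes F: "mdiff F N" and d0: "det (F 0) \<noteq> 0"
  shows "mdiff (\<lambda>t. ginv (F t)) N"
  unfolding mdiff_def
proof (intro conjI allI impI)
  have c: "\<And>t. F t \<in> carrier_mat N N" using F unfolding mdiff_def by auto
  show "\<And>t. ginv (F t) \<in> carrier_mat N N" using ginv_carrier[OF c] .
  fix i j assume i: "i < N" and j: "j < N"
  have e: "(\<lambda>t. ginv (F t) $$ (i,j)) = (\<lambda>t. (1 / det (F t)) * adj_mat (F t) $$ (i,j))"
  proof (rule ext)
    fix t show "ginv (F t) $$ (i,j) = (1 / det (F t)) * adj_mat (F t) $$ (i,j)"
      using c[of t] i j adj_mat(1)[OF c[of t]] unfolding ginv_def by auto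
  qed
  show "(\<lambda>t. ginv (F t) $$ (i,j)) differentiable (at 0)"
    unfolding e
    by (intro differentiable_mult differentiable_divide differentiable_const det_differentiable[OF F]
          adj_entry_differentiable[OF F i j] d0)
qed

lemma ginv_inverse: assumes D: "D \<in> carrier_mat N N" and d: "det D \<noteq> 0"
  shows "D * ginv D = 1\<^sub>m N" "ginv D * D = 1\<^sub>m N"
proof -
  have "D * ginv D = (1 / det D) \<cdot>\<^sub>m (D * adj_mat D)"
    unfolding ginv_def using mult_smult_distrib[OF D adj_mat(1)[OF D]] by simp
  also have "\<dots> = 1\<^sub>m N" unfolding adj_mat(2)[OF D] by (rule eq_matI) (use d in auto)
  finally show "D * ginv D = 1\<^sub>m N" .
  have "ginv D * D = (1 / det D) \<cdot>\<^sub>m (adj_mat D * D)"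
    unfolding ginv_def using mult_smult_assoc_mat[OF adj_mat(1)[OF D] D] by simp
  also have "\<dots> = 1\<^sub>m N" unfolding adj_mat(3)[OF D] by (rule eq_matI) (use d in auto)
  finally show "ginv D * D = 1\<^sub>m N" .
qed

lemma minv_ginv: assumes D: "D \<in> carrier_mat N N" and d: "det D \<noteq> 0"
  shows "minv D = ginv D"
proof -
  have u: "D \<in> Units (ring_mat TYPE(complex) N N)" by (rule det_non_zero_imp_unit[OF D d])
  obtain G where G: "mat_inverse D = Some G"
    using mat_inverse(1)[OF D, where b=N] u by (cases "mat_inverse D") auto
  from mat_inverse(2)[OF D G] have GD: "G * D = 1\<^sub>m N" and cG: "G \<in> carrier_mat N N" by auto
  have "G = G * (D * ginv D)" using ginv_inverse(1)[OF D d] cG by simp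
  also have "\<dots> = (G * D) * ginv D" using cG D ginv_carrier[OF D] by simp
  also have "\<dots> = ginv D" using GD ginv_carrier[OF D] by simp
  finally show ?thesis unfolding minv_def G by simp
qed

lemma det_ne0_of_invertible: assumes D: "D \<in> carrier_mat N N" and inv: "invertible_mat D"
  shows "det D \<noteq> (0::complex)"
proof -
  from inv obtain G where G: "inverts_mat D G" "inverts_mat G D" unfolding invertible_mat_def by auto
  have dG: "dim_row G = N" "dim_col G = N" using G D unfolding inverts_mat_def
    by (metis carrier_matD index_mult_mat(2) index_mult_mat(3) index_one_mat(2) index_one_mat(3))+
  then have cG: "G \<in> carrier_mat N N" by auto
  have "D * G = 1\<^sub>m N" using G D unfolding inverts_mat_def by auto
  then have "det D * det G = 1" using det_mult[OF D cG] by simp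
  then show ?thesis by auto
qed



definition mder :: "(real \<Rightarrow> complex mat) \<Rightarrow> complex mat \<Rightarrow> nat \<Rightarrow> bool" where
  "mder F F' N \<equiv> (\<forall>t. F t \<in> carrier_mat N N) \<and> F' \<in> carrier_mat N N \<and>
     (\<forall>i<N. \<forall>j<N. ((\<lambda>t. F t $$ (i,j)) has_vector_derivative F' $$ (i,j)) (at 0))"

lemma diff_vd: fixes f :: "real \<Rightarrow> complex" assumes "f differentiable (at 0)"
  shows "(f has_vector_derivative (SOME d. (f has_vector_derivative d) (at 0))) (at 0)"
proof -
  obtain D where D: "(f has_derivative D) (at 0)" using assms unfolding differentiable_def by auto
  have lin: "bounded_linear D" using D by (rule has_derivative_bounded_linear)
  have "D = (\<lambda>h. h *\<^sub>R D 1)"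
  proof
    fix h :: real
    have "D (h *\<^sub>R 1) = h *\<^sub>R D 1" by (rule linear_scale[OF bounded_linear.linear[OF lin]])
    then show "D h = h *\<^sub>R D 1" by simp
  qed
  then have "(f has_vector_derivative D 1) (at 0)" using D unfolding has_vector_derivative_def by simp
  then show ?thesis by (rule someI)
qed

lemma vd_differentiable: "(f has_vector_derivative d) (at 0) \<Longrightarrow> f differentiable (at 0)"
  unfolding has_vector_derivative_def differentiable_def by auto

lemma vd_unique: fixes f :: "real \<Rightarrow> complex"
  assumes "(f has_vector_derivative d1) (at 0)" "(f has_vector_derivative d2) (at 0)" shows "d1 = d2"
proof -
  have "(\<lambda>h. h *\<^sub>R d1) = (\<lambda>h. h *\<^sub>R d2)"
    using has_derivative_unique assms unfolding has_vector_derivative_def by blast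
  then show ?thesis by (metis scaleR_one)
qed

lemma vd_transform: fixes f g :: "real \<Rightarrow> complex"
  assumes "(f has_vector_derivative d) (at 0)" "\<forall>\<^sub>F t in at 0. f t = g t" "f 0 = g 0"
  shows "(g has_vector_derivative d) (at 0)"
  using has_derivative_transform_eventually[of f "\<lambda>h. h *\<^sub>R d" 0 UNIV g] assms
  unfolding has_vector_derivative_def by auto

lemma mdiff_mder: "mdiff F N \<Longrightarrow> mder F (mat N N (\<lambda>(i,j). SOME d. ((\<lambda>t. F t $$ (i,j)) has_vector_derivative d) (at 0))) N"
  unfolding mdiff_def mder_def using diff_vd by auto

lemma mder_mdiff: "mder F F' N \<Longrightarrow> mdiff F N"
  unfolding mdiff_def mder_def using vd_differentiable by blast

lemma mder_carrier: "mder F F' N \<Longrightarrow> F t \<in> carrier_mat N N" "mder F F' N \<Longrightarrow> F' \<in> carrier_mat N N"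
  unfolding mder_def by auto

lemma mder_cong: "mder F F' N \<Longrightarrow> F' = F'' \<Longrightarrow> mder F F'' N" by simp

lemma mder_const: "A \<in> carrier_mat N N \<Longrightarrow> mder (\<lambda>t. A) (0\<^sub>m N N) N"
  unfolding mder_def by auto

lemma mder_add: assumes F: "mder F F' N" and G: "mder G G' N"
  shows "mder (\<lambda>t. F t + G t) (F' + G') N"
  unfolding mder_def
proof (intro conjI allI impI)
  have cF: "\<And>t. F t \<in> carrier_mat N N" and cG: "\<And>t. G t \<in> carrier_mat N N"
    and cF': "F' \<in> carrier_mat N N" and cG': "G' \<in> carrier_mat N N" using F G unfolding mder_def by auto
  show "\<And>t. F t + G t \<in> carrier_mat N N" using cF cG by simp
  show "F' + G' \<in> carrier_mat N N" using cF' cG' by simp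
  fix i j assume i: "i < N" and j: "j < N"
  have e: "(\<lambda>t. (F t + G t) $$ (i,j)) = (\<lambda>t. F t $$ (i,j) + G t $$ (i,j))"
  proof (rule ext) fix t show "(F t + G t) $$ (i,j) = F t $$ (i,j) + G t $$ (i,j)" using cF[of t] cG[of t] i j by simp qed
  have "((\<lambda>t. F t $$ (i,j) + G t $$ (i,j)) has_vector_derivative F' $$ (i,j) + G' $$ (i,j)) (at 0)"
    using F G i j unfolding mder_def by (auto intro!: has_vector_derivative_add)
  then show "((\<lambda>t. (F t + G t) $$ (i,j)) has_vector_derivative (F' + G') $$ (i,j)) (at 0)"
    unfolding e using cF' cG' i j by simp
qed

lemma mder_minus: assumes F: "mder F F' N" and G: "mder G G' N"
  shows "mder (\<lambda>t. F t - G t) (F' - G') N"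
  unfolding mder_def
proof (intro conjI allI impI)
  have cF: "\<And>t. F t \<in> carrier_mat N N" and cG: "\<And>t. G t \<in> carrier_mat N N"
    and cF': "F' \<in> carrier_mat N N" and cG': "G' \<in> carrier_mat N N" using F G unfolding mder_def by auto
  show "\<And>t. F t - G t \<in> carrier_mat N N" using cF cG by (simp add: minus_carrier_mat)
  show "F' - G' \<in> carrier_mat N N" using cF' cG' by (simp add: minus_carrier_mat)
  fix i j assume i: "i < N" and j: "j < N"
  have e: "(\<lambda>t. (F t - G t) $$ (i,j)) = (\<lambda>t. F t $$ (i,j) - G t $$ (i,j))"
  proof (rule ext) fix t show "(F t - G t) $$ (i,j) = F t $$ (i,j) - G t $$ (i,j)" using cF[of t] cG[of t] i j by simp qed
  have "((\<lambda>t. F t $$ (i,j) - G t $$ (i,j)) has_vector_derivative F' $$ (i,j) - G' $$ (i,j)) (at 0)"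
    using F G i j unfolding mder_def by (auto intro!: has_vector_derivative_diff)
  then show "((\<lambda>t. (F t - G t) $$ (i,j)) has_vector_derivative (F' - G') $$ (i,j)) (at 0)"
    unfolding e using cF' cG' i j by simp
qed

lemma mder_smult: assumes F: "mder F F' N"
  shows "mder (\<lambda>t. k \<cdot>\<^sub>m F t) (k \<cdot>\<^sub>m F') N"
  unfolding mder_def
proof (intro conjI allI impI)
  have cF: "\<And>t. F t \<in> carrier_mat N N" and cF': "F' \<in> carrier_mat N N" using F unfolding mder_def by auto
  show "\<And>t. k \<cdot>\<^sub>m F t \<in> carrier_mat N N" using cF by simp
  show "k \<cdot>\<^sub>m F' \<in> carrier_mat N N" using cF' by simp
  fix i j assume i: "i < N" and j: "j < N"
  have e: "(\<lambda>t. (k \<cdot>\<^sub>m F t) $$ (i,j)) = (\<lambda>t. k * F t $$ (i,j))"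
  proof (rule ext) fix t show "(k \<cdot>\<^sub>m F t) $$ (i,j) = k * F t $$ (i,j)" using cF[of t] i j by simp qed
  have "((\<lambda>t. k * F t $$ (i,j)) has_vector_derivative k * F' $$ (i,j)) (at 0)"
    using F i j unfolding mder_def by (auto intro!: has_vector_derivative_mult_right)
  then show "((\<lambda>t. (k \<cdot>\<^sub>m F t) $$ (i,j)) has_vector_derivative (k \<cdot>\<^sub>m F') $$ (i,j)) (at 0)"
    unfolding e using cF' i j by simp
qed

lemma mder_mult: assumes F: "mder F F' N" and G: "mder G G' N"
  shows "mder (\<lambda>t. F t * G t) (F' * G 0 + F 0 * G') N"
  unfolding mder_def
proof (intro conjI allI impI)
  have cF: "\<And>t. F t \<in> carrier_mat N N" and cG: "\<And>t. G t \<in> carrier_mat N N"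
    and cF': "F' \<in> carrier_mat N N" and cG': "G' \<in> carrier_mat N N" using F G unfolding mder_def by auto
  show "\<And>t. F t * G t \<in> carrier_mat N N" using cF cG by simp
  show "F' * G 0 + F 0 * G' \<in> carrier_mat N N" using cF' cG' cF cG by simp
  fix i j assume i: "i < N" and j: "j < N"
  have e: "(\<lambda>t. (F t * G t) $$ (i,j)) = (\<lambda>t. \<Sum>k\<in>{0..<N}. F t $$ (i,k) * G t $$ (k,j))"
  proof (rule ext) fix t show "(F t * G t) $$ (i,j) = (\<Sum>k\<in>{0..<N}. F t $$ (i,k) * G t $$ (k,j))"
      by (rule mult_index_sum[OF cF cG i j]) qed
  have "((\<lambda>t. \<Sum>k\<in>{0..<N}. F t $$ (i,k) * G t $$ (k,j)) has_vector_derivative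
        (\<Sum>k\<in>{0..<N}. F 0 $$ (i,k) * G' $$ (k,j) + F' $$ (i,k) * G 0 $$ (k,j))) (at 0)"
    apply (rule has_vector_derivative_sum)
    apply (rule has_vector_derivative_mult)
    using F G i j unfolding mder_def by auto
  moreover have "(\<Sum>k\<in>{0..<N}. F 0 $$ (i,k) * G' $$ (k,j) + F' $$ (i,k) * G 0 $$ (k,j)) = (F' * G 0 + F 0 * G') $$ (i,j)"
    using mult_index_sum[OF cF' cG i j, of 0] mult_index_sum[OF cF cG' i j, of 0] cF' cG' cF[of 0] cG[of 0] i j
    by (simp add: sum.distrib add.commute)
  ultimately show "((\<lambda>t. (F t * G t) $$ (i,j)) has_vector_derivative (F' * G 0 + F 0 * G') $$ (i,j)) (at 0)"
    unfolding e by simp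
qed

lemma Jc_lin: assumes x: "x \<in> carrier_vec (2*n)" and e: "e \<in> carrier_vec (2*n)"
  shows "Jc n (x + t \<cdot>\<^sub>v e) = Jc n x + complex_of_real t \<cdot>\<^sub>m Jc n e"
proof (rule eq_matI)
  fix i j assume "i < dim_row (Jc n x + complex_of_real t \<cdot>\<^sub>m Jc n e)" "j < dim_col (Jc n x + complex_of_real t \<cdot>\<^sub>m Jc n e)"
  then have i: "i < 2*n" and j: "j < 2*n" by auto
  have n: "0 < n" using i by simp
  have m1: "(i + (j - n)) mod n < 2*n" "(i - n + j) mod n < 2*n"
    using mod_less_divisor[OF n, of "i + (j - n)"] mod_less_divisor[OF n, of "i - n + j"] by linarith+
  have m2: "(i + j - n) mod n < 2*n" using mod_less_divisor[OF n, of "i + j - n"] by linarith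
  have xe: "\<And>k. k < 2*n \<Longrightarrow> (x + t \<cdot>\<^sub>v e) $ k = x $ k + t * e $ k" using x e by auto
  show "Jc n (x + t \<cdot>\<^sub>v e) $$ (i,j) = (Jc n x + complex_of_real t \<cdot>\<^sub>m Jc n e) $$ (i,j)"
    using i j m1 x e xe m2 by (simp add: Jc_index algebra_simps)
qed auto

lemma vd_lin: "((\<lambda>t. a + complex_of_real t * b) has_vector_derivative b) (at 0)"
proof -
  have "((\<lambda>t. complex_of_real t) has_vector_derivative complex_of_real 1) (at 0)"
    by (rule has_vector_derivative_of_real) (rule DERIV_ident)
  then have "((\<lambda>t. complex_of_real t * b) has_vector_derivative complex_of_real 1 * b) (at 0)"
    by (rule has_vector_derivative_mult_left)
  then have "((\<lambda>t. a + complex_of_real t * b) has_vector_derivative 0 + complex_of_real 1 * b) (at 0)"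
    by (intro has_vector_derivative_add) simp_all
  then show ?thesis by simp
qed

lemma mder_J: assumes x: "x \<in> carrier_vec (2*n)" and e: "e \<in> carrier_vec (2*n)"
  shows "mder (\<lambda>t. Jc n (x + t \<cdot>\<^sub>v e)) (Jc n e) (2*n)"
  unfolding mder_def
proof (intro conjI allI impI)
  show "\<And>t. Jc n (x + t \<cdot>\<^sub>v e) \<in> carrier_mat (2*n) (2*n)" by simp
  show "Jc n e \<in> carrier_mat (2*n) (2*n)" by simp
  fix i j assume i: "i < 2*n" and j: "j < 2*n"
  have ee: "(\<lambda>t. Jc n (x + t \<cdot>\<^sub>v e) $$ (i,j)) = (\<lambda>t. Jc n x $$ (i,j) + complex_of_real t * Jc n e $$ (i,j))"
  proof (rule ext) fix t show "Jc n (x + t \<cdot>\<^sub>v e) $$ (i,j) = Jc n x $$ (i,j) + complex_of_real t * Jc n e $$ (i,j)"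
      unfolding Jc_lin[OF x e] using i j by simp qed
  show "((\<lambda>t. Jc n (x + t \<cdot>\<^sub>v e) $$ (i,j)) has_vector_derivative Jc n e $$ (i,j)) (at 0)"
    unfolding ee by (rule vd_lin)
qed

lemma scal_der:
  fixes u w :: "real \<Rightarrow> complex vec" and P :: "real \<Rightarrow> complex mat"
  assumes cu: "\<And>t. u t \<in> carrier_vec N" and cw: "\<And>t. w t \<in> carrier_vec N"
    and cu': "u' \<in> carrier_vec N" and cw': "w' \<in> carrier_vec N"
    and du: "\<And>i. i < N \<Longrightarrow> ((\<lambda>t. u t $ i) has_vector_derivative u' $ i) (at 0)"
    and dw: "\<And>i. i < N \<Longrightarrow> ((\<lambda>t. w t $ i) has_vector_derivative w' $ i) (at 0)"
    and P: "mder P P' N"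
  shows "((\<lambda>t. u t \<bullet> (P t *\<^sub>v w t)) has_vector_derivative
           u' \<bullet> (P 0 *\<^sub>v w 0) + u 0 \<bullet> (P' *\<^sub>v w 0) + u 0 \<bullet> (P 0 *\<^sub>v w')) (at 0)"
proof -
  have cP: "\<And>t. P t \<in> carrier_mat N N" and cP': "P' \<in> carrier_mat N N" using P unfolding mder_def by auto
  have dP: "\<And>i j. i < N \<Longrightarrow> j < N \<Longrightarrow> ((\<lambda>t. P t $$ (i,j)) has_vector_derivative P' $$ (i,j)) (at 0)"
    using P unfolding mder_def by auto
  have sp: "\<And>a A b. a \<in> carrier_vec N \<Longrightarrow> A \<in> carrier_mat N N \<Longrightarrow> b \<in> carrier_vec N \<Longrightarrow>
     a \<bullet> (A *\<^sub>v b) = (\<Sum>i\<in>{0..<N}. a $ i * (\<Sum>j\<in>{0..<N}. A $$ (i,j) * b $ j))"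
    by (auto simp: scalar_prod_def intro!: sum.cong)
  have e: "(\<lambda>t. u t \<bullet> (P t *\<^sub>v w t)) = (\<lambda>t. \<Sum>i\<in>{0..<N}. u t $ i * (\<Sum>j\<in>{0..<N}. P t $$ (i,j) * w t $ j))"
    using sp[OF cu cP cw] by auto
  have d: "((\<lambda>t. \<Sum>i\<in>{0..<N}. u t $ i * (\<Sum>j\<in>{0..<N}. P t $$ (i,j) * w t $ j)) has_vector_derivative
    (\<Sum>i\<in>{0..<N}. u 0 $ i * (\<Sum>j\<in>{0..<N}. P 0 $$ (i,j) * w' $ j + P' $$ (i,j) * w 0 $ j)
        + u' $ i * (\<Sum>j\<in>{0..<N}. P 0 $$ (i,j) * w 0 $ j))) (at 0)"
    apply (rule has_vector_derivative_sum)
    apply (rule has_vector_derivative_mult)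
     apply (simp add: du)
    apply (rule has_vector_derivative_sum)
    apply (rule has_vector_derivative_mult)
     apply (simp add: dP)
    apply (simp add: dw)
    done
  have v: "(\<Sum>i\<in>{0..<N}. u 0 $ i * (\<Sum>j\<in>{0..<N}. P 0 $$ (i,j) * w' $ j + P' $$ (i,j) * w 0 $ j)
        + u' $ i * (\<Sum>j\<in>{0..<N}. P 0 $$ (i,j) * w 0 $ j))
     = u' \<bullet> (P 0 *\<^sub>v w 0) + u 0 \<bullet> (P' *\<^sub>v w 0) + u 0 \<bullet> (P 0 *\<^sub>v w')"
    unfolding sp[OF cu' cP cw] sp[OF cu cP' cw] sp[OF cu cP cw']
    by (simp add: sum.distrib distrib_left algebra_simps)
  show ?thesis using d unfolding e v .
qed



lemma cvec_carrier[simp]: "x \<in> carrier_vec N \<Longrightarrow> cvec x \<in> carrier_vec N"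
  unfolding cvec_def by simp

lemma cvec_dim[simp]: "dim_vec (cvec x) = dim_vec x"
  unfolding cvec_def by simp

lemma cvec_index[simp]: "i < dim_vec x \<Longrightarrow> cvec x $ i = complex_of_real (x $ i)"
  unfolding cvec_def by simp

lemma Dmat_carrier: "M \<in> carrier_mat (2*n) (2*n) \<Longrightarrow> Dmat n M eps y \<in> carrier_mat (2*n) (2*n)"
  unfolding Dmat_def by (simp add: minus_carrier_mat)

lemma pd_main:
  fixes M :: "complex mat" and x e :: "real vec"
  assumes M: "M \<in> carrier_mat (2*n) (2*n)" and x: "x \<in> carrier_vec (2*n)" and e: "e \<in> carrier_vec (2*n)"
    and inv: "invertible_mat (Dmat n M eps x)"
  shows "((\<lambda>t. Qtilde n M eps (x + t \<cdot>\<^sub>v e)) has_vector_derivative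
      (cvec e \<bullet> ((M * minv (Dmat n M eps x)) *\<^sub>v cvec x)
       + cvec x \<bullet> ((M * (- (minv (Dmat n M eps x) * (0\<^sub>m (2*n) (2*n) - complex_of_real (eps^2) \<cdot>\<^sub>m
            ((Jc n e * M) * (Jc n x * M) + (Jc n x * M) * (Jc n e * M))) * minv (Dmat n M eps x)))) *\<^sub>v cvec x)
       + cvec x \<bullet> ((M * minv (Dmat n M eps x)) *\<^sub>v cvec e))) (at 0)"
proof -
  let ?N = "2*n"
  let ?c = "complex_of_real (eps^2)"
  let ?X = "cvec x" and ?E = "cvec e"
  let ?J0 = "Jc n x" and ?Je = "Jc n e"
  let ?S = "(?Je * M) * (?J0 * M) + (?J0 * M) * (?Je * M)"
  let ?D' = "0\<^sub>m ?N ?N - ?c \<cdot>\<^sub>m ?S"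
  define Dt where "Dt t = Dmat n M eps (x + t \<cdot>\<^sub>v e)" for t
  have x0: "x + 0 \<cdot>\<^sub>v e = x" using x e by (intro eq_vecI) auto
  have Dt_eq: "Dt = (\<lambda>t. 1\<^sub>m ?N - ?c \<cdot>\<^sub>m ((Jc n (x + t \<cdot>\<^sub>v e) * M) * (Jc n (x + t \<cdot>\<^sub>v e) * M)))"
    unfolding Dt_def Dmat_def by simp
  have cD: "\<And>t. Dt t \<in> carrier_mat ?N ?N" unfolding Dt_def by (rule Dmat_carrier[OF M])
  have dJ: "mder (\<lambda>t. Jc n (x + t \<cdot>\<^sub>v e)) ?Je ?N" by (rule mder_J[OF x e])
  have dJM: "mder (\<lambda>t. Jc n (x + t \<cdot>\<^sub>v e) * M) (?Je * M) ?N"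
    by (rule mder_cong[OF mder_mult[OF dJ mder_const[OF M]]]) (use M in simp)
  have dS: "mder (\<lambda>t. (Jc n (x + t \<cdot>\<^sub>v e) * M) * (Jc n (x + t \<cdot>\<^sub>v e) * M)) ?S ?N"
    by (rule mder_cong[OF mder_mult[OF dJM dJM]]) (simp add: x0)
  have dD: "mder Dt ?D' ?N"
    unfolding Dt_eq by (rule mder_minus[OF mder_const mder_smult[OF dS]]) simp
  have D0: "Dt 0 = Dmat n M eps x" unfolding Dt_def by (simp add: x0)
  have d0: "det (Dt 0) \<noteq> 0" using det_ne0_of_invertible[OF cD inv[folded D0]] .
  have mG: "mdiff (\<lambda>t. ginv (Dt t)) ?N" by (rule mdiff_ginv[OF mder_mdiff[OF dD] d0])
  obtain G' where dG: "mder (\<lambda>t. ginv (Dt t)) G' ?N" using mdiff_mder[OF mG] by blast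
  have cG': "G' \<in> carrier_mat ?N ?N" using dG unfolding mder_def by auto
  let ?G0 = "ginv (Dt 0)"
  have cG0: "?G0 \<in> carrier_mat ?N ?N" by (rule ginv_carrier[OF cD])
  have cD': "?D' \<in> carrier_mat ?N ?N" using M by (simp add: minus_carrier_mat)
  have ev: "\<forall>\<^sub>F t in at 0. det (Dt t) \<noteq> 0"
  proof -
    have "(\<lambda>t. det (Dt t)) differentiable (at 0)" by (rule det_differentiable[OF mder_mdiff[OF dD]])
    then obtain Df where "((\<lambda>t. det (Dt t)) has_derivative Df) (at 0)" unfolding differentiable_def by auto
    then have "continuous (at 0) (\<lambda>t. det (Dt t))" by (rule has_derivative_continuous)
    then have "((\<lambda>t. det (Dt t)) \<longlongrightarrow> det (Dt 0)) (at 0)" unfolding continuous_within by simp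
    then show ?thesis by (rule tendsto_imp_eventually_ne) (rule d0)
  qed
  have rel: "?D' * ?G0 + Dt 0 * G' = 0\<^sub>m ?N ?N"
  proof (rule eq_matI)
    fix i j assume "i < dim_row (0\<^sub>m ?N ?N :: complex mat)" "j < dim_col (0\<^sub>m ?N ?N :: complex mat)"
    then have i: "i < ?N" and j: "j < ?N" by auto
    have dP: "mder (\<lambda>t. Dt t * ginv (Dt t)) (?D' * ?G0 + Dt 0 * G') ?N" by (rule mder_mult[OF dD dG])
    then have d1: "((\<lambda>t. (Dt t * ginv (Dt t)) $$ (i,j)) has_vector_derivative (?D' * ?G0 + Dt 0 * G') $$ (i,j)) (at 0)"
      unfolding mder_def using i j by auto
    have ev2: "\<forall>\<^sub>F t in at 0. (1\<^sub>m ?N :: complex mat) $$ (i,j) = (Dt t * ginv (Dt t)) $$ (i,j)"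
      using ev by (rule eventually_mono) (simp add: ginv_inverse(1)[OF cD])
    have "((\<lambda>t. (1\<^sub>m ?N :: complex mat) $$ (i,j)) has_vector_derivative 0) (at 0)" by simp
    then have d2: "((\<lambda>t. (Dt t * ginv (Dt t)) $$ (i,j)) has_vector_derivative 0) (at 0)"
      by (rule vd_transform) (use ev2 ginv_inverse(1)[OF cD[of 0] d0] in auto)
    show "(?D' * ?G0 + Dt 0 * G') $$ (i,j) = (0\<^sub>m ?N ?N :: complex mat) $$ (i,j)"
      using vd_unique[OF d1 d2] i j by simp
  qed (use cD' cG0 cD[of 0] cG' in auto)
  have DG': "Dt 0 * G' = - (?D' * ?G0)"
  proof (rule eq_matI)
    fix i j assume "i < dim_row (- (?D' * ?G0))" "j < dim_col (- (?D' * ?G0))"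
    then have i: "i < ?N" and j: "j < ?N" using cD' cG0 by auto
    have "(?D' * ?G0 + Dt 0 * G') $$ (i,j) = 0" using rel i j by simp
    then have "(?D' * ?G0) $$ (i,j) + (Dt 0 * G') $$ (i,j) = 0" using i j cD' cG0 cD[of 0] cG' by simp
    then have "(Dt 0 * G') $$ (i,j) = - ((?D' * ?G0) $$ (i,j))" by (simp add: eq_neg_iff_add_eq_0 add.commute)
    then show "(Dt 0 * G') $$ (i,j) = (- (?D' * ?G0)) $$ (i,j)" using i j cD' cG0 by simp
  qed (use cD' cG0 cD[of 0] cG' in auto)
  have G'eq: "G' = - (?G0 * ?D' * ?G0)"
  proof -
    have "G' = (?G0 * Dt 0) * G'" using ginv_inverse(2)[OF cD d0] cG' by simp
    also have "\<dots> = ?G0 * (Dt 0 * G')" using cG0 cD[of 0] cG' by simp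
    also have "\<dots> = ?G0 * (- (?D' * ?G0))" by (simp add: DG')
    also have "\<dots> = - (?G0 * ?D' * ?G0)" using cG0 cD' by simp
    finally show ?thesis .
  qed
  define q where "q t = cvec (x + t \<cdot>\<^sub>v e) \<bullet> ((M * ginv (Dt t)) *\<^sub>v cvec (x + t \<cdot>\<^sub>v e))" for t
  have dMG: "mder (\<lambda>t. M * ginv (Dt t)) (M * G') ?N"
    by (rule mder_cong[OF mder_mult[OF mder_const[OF M] dG]]) (use cG' cG0 M in simp)
  have cu: "\<And>t. cvec (x + t \<cdot>\<^sub>v e) \<in> carrier_vec ?N" using x e by simp
  have du: "((\<lambda>t. cvec (x + t \<cdot>\<^sub>v e) $ i) has_vector_derivative ?E $ i) (at 0)" if i: "i < ?N" for i
  proof -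
    have ee: "(\<lambda>t. cvec (x + t \<cdot>\<^sub>v e) $ i) = (\<lambda>t. complex_of_real (x $ i) + complex_of_real t * ?E $ i)"
      using x e i by (auto simp: cvec_def)
    show ?thesis unfolding ee by (rule vd_lin)
  qed
  have dq: "(q has_vector_derivative (?E \<bullet> ((M * ?G0) *\<^sub>v ?X) + ?X \<bullet> ((M * G') *\<^sub>v ?X) + ?X \<bullet> ((M * ?G0) *\<^sub>v ?E))) (at 0)"
    using scal_der[OF cu cu _ _ du du dMG] x e unfolding q_def by (simp add: x0)
  have Q_eq: "\<forall>\<^sub>F t in at 0. q t = Qtilde n M eps (x + t \<cdot>\<^sub>v e)"
    using ev by (rule eventually_mono) (simp add: q_def Qtilde_def Dt_def[symmetric] minv_ginv[OF cD])
  have Q0: "q 0 = Qtilde n M eps (x + 0 \<cdot>\<^sub>v e)"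
    using d0 by (simp add: q_def Qtilde_def Dt_def[symmetric] minv_ginv[OF cD])
  have mg0: "minv (Dmat n M eps x) = ?G0" using minv_ginv[OF cD d0] D0 by simp
  have "((\<lambda>t. Qtilde n M eps (x + t \<cdot>\<^sub>v e)) has_vector_derivative
      (?E \<bullet> ((M * ?G0) *\<^sub>v ?X) + ?X \<bullet> ((M * G') *\<^sub>v ?X) + ?X \<bullet> ((M * ?G0) *\<^sub>v ?E))) (at 0)"
    by (rule vd_transform[OF dq Q_eq Q0])
  then show ?thesis unfolding mg0 G'eq .
qed



context
  fixes N :: nat
begin

lemma sq_assoc: "A \<in> carrier_mat N N \<Longrightarrow> B \<in> carrier_mat N N \<Longrightarrow> C \<in> carrier_mat N N \<Longrightarrow> (A * B) * C = A * (B * (C :: complex mat))"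
  by simp
lemma sq_assoc_v: "A \<in> carrier_mat N N \<Longrightarrow> B \<in> carrier_mat N N \<Longrightarrow> v \<in> carrier_vec N \<Longrightarrow> (A * B) *\<^sub>v v = A *\<^sub>v (B *\<^sub>v (v :: complex vec))"
  by simp
lemma sq_distl: "A \<in> carrier_mat N N \<Longrightarrow> B \<in> carrier_mat N N \<Longrightarrow> C \<in> carrier_mat N N \<Longrightarrow> A * (B + C) = A * B + A * (C :: complex mat)"
  by (rule mult_add_distrib_mat)
lemma sq_distr: "A \<in> carrier_mat N N \<Longrightarrow> B \<in> carrier_mat N N \<Longrightarrow> C \<in> carrier_mat N N \<Longrightarrow> (A + B) * C = A * C + B * (C :: complex mat)"
  by (rule add_mult_distrib_mat)
lemma sq_minus_l: "A \<in> carrier_mat N N \<Longrightarrow> B \<in> carrier_mat N N \<Longrightarrow> C \<in> carrier_mat N N \<Longrightarrow> A * (B - C) = A * B - A * (C :: complex mat)"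
  by (rule mult_minus_distrib_mat)
lemma sq_minus_r: "A \<in> carrier_mat N N \<Longrightarrow> B \<in> carrier_mat N N \<Longrightarrow> C \<in> carrier_mat N N \<Longrightarrow> (A - B) * C = A * C - B * (C :: complex mat)"
  by (rule minus_mult_distrib_mat)
lemma sq_smult_r: "A \<in> carrier_mat N N \<Longrightarrow> B \<in> carrier_mat N N \<Longrightarrow> A * (c \<cdot>\<^sub>m B) = c \<cdot>\<^sub>m (A * (B :: complex mat))"
  by (rule mult_smult_distrib)
lemma sq_smult_l: "A \<in> carrier_mat N N \<Longrightarrow> B \<in> carrier_mat N N \<Longrightarrow> (c \<cdot>\<^sub>m A) * B = c \<cdot>\<^sub>m (A * (B :: complex mat))"
  by (rule mult_smult_assoc_mat)
lemma sq_neg_r: "A \<in> carrier_mat N N \<Longrightarrow> B \<in> carrier_mat N N \<Longrightarrow> A * (- B) = - (A * (B :: complex mat))"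
  by simp
lemma sq_neg_l: "A \<in> carrier_mat N N \<Longrightarrow> B \<in> carrier_mat N N \<Longrightarrow> (- A) * B = - (A * (B :: complex mat))"
  by simp
lemma sq_zero_minus: "A \<in> carrier_mat N N \<Longrightarrow> 0\<^sub>m N N - A = - (A :: complex mat)"
  by (rule eq_matI) auto
lemma sq_smult_add: "A \<in> carrier_mat N N \<Longrightarrow> B \<in> carrier_mat N N \<Longrightarrow> c \<cdot>\<^sub>m (A + B) = c \<cdot>\<^sub>m A + c \<cdot>\<^sub>m (B :: complex mat)"
  by (rule add_smult_distrib_left_mat)
lemma sq_mv_add: "A \<in> carrier_mat N N \<Longrightarrow> B \<in> carrier_mat N N \<Longrightarrow> v \<in> carrier_vec N \<Longrightarrow> (A + B) *\<^sub>v v = A *\<^sub>v v + B *\<^sub>v (v :: complex vec)"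
  by (rule add_mult_distrib_mat_vec)
lemma sq_mv_smult: "A \<in> carrier_mat N N \<Longrightarrow> v \<in> carrier_vec N \<Longrightarrow> (c \<cdot>\<^sub>m A) *\<^sub>v v = c \<cdot>\<^sub>v (A *\<^sub>v (v :: complex vec))"
  by (rule smult_mat_vec)
lemma sq_mv_neg: "A \<in> carrier_mat N N \<Longrightarrow> v \<in> carrier_vec N \<Longrightarrow> (- A) *\<^sub>v v = - (A *\<^sub>v (v :: complex vec))"
  by simp
lemma sq_sp_add: "u \<in> carrier_vec N \<Longrightarrow> v \<in> carrier_vec N \<Longrightarrow> w \<in> carrier_vec N \<Longrightarrow> u \<bullet> (v + w) = u \<bullet> v + u \<bullet> (w :: complex vec)"
  by (rule scalar_prod_add_distrib)
lemma sq_sp_smult: "u \<in> carrier_vec N \<Longrightarrow> v \<in> carrier_vec N \<Longrightarrow> u \<bullet> (c \<cdot>\<^sub>v v) = c * (u \<bullet> (v :: complex vec))"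
  by simp
lemma sq_sp_neg: "u \<in> carrier_vec N \<Longrightarrow> v \<in> carrier_vec N \<Longrightarrow> u \<bullet> (- v) = - (u \<bullet> (v :: complex vec))"
  by simp
lemma sq_tr_sp: "A \<in> carrier_mat N N \<Longrightarrow> y \<in> carrier_vec N \<Longrightarrow> x \<in> carrier_vec N \<Longrightarrow> (transpose_mat A *\<^sub>v y) \<bullet> x = y \<bullet> (A *\<^sub>v (x :: complex vec))"
  by (rule transpose_vec_mult_scalar)
lemma sq_add_carrier: "A \<in> carrier_mat N N \<Longrightarrow> B \<in> carrier_mat N N \<Longrightarrow> A + B \<in> carrier_mat N N" by simp
lemma sq_minus_carrier: "A \<in> carrier_mat N N \<Longrightarrow> B \<in> carrier_mat N N \<Longrightarrow> A - B \<in> carrier_mat N N" by (simp add: minus_carrier_mat)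
lemma sq_neg_carrier: "A \<in> carrier_mat N N \<Longrightarrow> - A \<in> carrier_mat N N" by simp
lemma sq_smult_carrier: "A \<in> carrier_mat N N \<Longrightarrow> c \<cdot>\<^sub>m A \<in> carrier_mat N N" by simp
lemma sq_vadd_carrier: "u \<in> carrier_vec N \<Longrightarrow> v \<in> carrier_vec N \<Longrightarrow> u + v \<in> carrier_vec N" by simp
lemma sq_vsmult_carrier: "u \<in> carrier_vec N \<Longrightarrow> c \<cdot>\<^sub>v u \<in> carrier_vec N" by simp
lemma sq_vneg_carrier: "u \<in> carrier_vec N \<Longrightarrow> - u \<in> carrier_vec N" by simp

lemmas sq_rules = sq_assoc sq_assoc_v sq_distl sq_distr sq_minus_l sq_minus_r sq_smult_r sq_smult_l sq_neg_r sq_neg_l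
  sq_zero_minus sq_smult_add sq_mv_add sq_mv_smult sq_mv_neg sq_sp_add sq_sp_smult sq_sp_neg sq_tr_sp
  sq_add_carrier sq_minus_carrier sq_neg_carrier sq_smult_carrier sq_vadd_carrier sq_vsmult_carrier sq_vneg_carrier

end

lemma val_eq:
  fixes M G0 J0 Je :: "complex mat" and X E :: "complex vec" and c :: complex
  assumes cM: "M \<in> carrier_mat N N" and cG: "G0 \<in> carrier_mat N N" and cJ0: "J0 \<in> carrier_mat N N"
    and cJe: "Je \<in> carrier_mat N N" and X: "X \<in> carrier_vec N" and i: "i < N"
  shows "unit_vec N i \<bullet> ((M * G0) *\<^sub>v X)
       + X \<bullet> ((M * (- (G0 * (0\<^sub>m N N - c \<cdot>\<^sub>m ((Je * M) * (J0 * M) + (J0 * M) * (Je * M))) * G0))) *\<^sub>v X)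
       + X \<bullet> ((M * G0) *\<^sub>v unit_vec N i)
     = ((M * G0) *\<^sub>v X) $ i + (transpose_mat (M * G0) *\<^sub>v X) $ i
       + c * ((transpose_mat (M * G0) *\<^sub>v X) \<bullet> (Je *\<^sub>v ((M * J0 * M * G0) *\<^sub>v X))
             + (transpose_mat (M * G0 * J0 * M) *\<^sub>v X) \<bullet> (Je *\<^sub>v ((M * G0) *\<^sub>v X)))"
proof -
  have E: "unit_vec N i \<in> carrier_vec N" by simp
  have f1: "unit_vec N i \<bullet> ((M * G0) *\<^sub>v X) = ((M * G0) *\<^sub>v X) $ i"
    using i cM cG X by simp
  have f3: "X \<bullet> ((M * G0) *\<^sub>v unit_vec N i) = (transpose_mat (M * G0) *\<^sub>v X) $ i"
  proof -
    have "X \<bullet> ((M * G0) *\<^sub>v unit_vec N i) = (transpose_mat (M * G0) *\<^sub>v X) \<bullet> unit_vec N i"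
      using transpose_vec_mult_scalar[of "M * G0" N N "unit_vec N i" X] cM cG X by simp
    also have "\<dots> = (transpose_mat (M * G0) *\<^sub>v X) $ i" using i by simp
    finally show ?thesis .
  qed
  have f2: "X \<bullet> ((M * (- (G0 * (0\<^sub>m N N - c \<cdot>\<^sub>m ((Je * M) * (J0 * M) + (J0 * M) * (Je * M))) * G0))) *\<^sub>v X)
     = c * ((transpose_mat (M * G0) *\<^sub>v X) \<bullet> (Je *\<^sub>v ((M * J0 * M * G0) *\<^sub>v X))
             + (transpose_mat (M * G0 * J0 * M) *\<^sub>v X) \<bullet> (Je *\<^sub>v ((M * G0) *\<^sub>v X)))"
    using cM cG cJ0 cJe X by (simp add: sq_rules[where N=N] algebra_simps)
  show ?thesis using f1 f2 f3 by simp
qed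

lemma cvec_unit: "cvec (unit_vec N i) = (unit_vec N i :: complex vec)"
  by (rule eq_vecI) (auto simp: cvec_def unit_vec_def)

lemma minv_carrier: assumes D: "D \<in> carrier_mat N N" and inv: "invertible_mat D"
  shows "minv D \<in> carrier_mat N N" "D * minv D = 1\<^sub>m N" "minv D * D = 1\<^sub>m N"
  using minv_ginv[OF D det_ne0_of_invertible[OF D inv]] ginv_carrier[OF D]
    ginv_inverse[OF D det_ne0_of_invertible[OF D inv]] by auto

lemma grad_formula:
  fixes M :: "complex mat" and x :: "real vec"
  assumes M: "M \<in> carrier_mat (2*n) (2*n)" and x: "x \<in> carrier_vec (2*n)"
    and inv: "invertible_mat (Dmat n M eps x)"
  shows "grad (2*n) (Qtilde n M eps) x = gradF M (minv (Dmat n M eps x)) (Jc n x) (cvec x) (complex_of_real (eps^2)) (Gam n)"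
proof -
  let ?G0 = "minv (Dmat n M eps x)" and ?c = "complex_of_real (eps^2)"
  have cG: "?G0 \<in> carrier_mat (2*n) (2*n)" using minv_carrier(1)[OF Dmat_carrier[OF M] inv] .
  have cX: "cvec x \<in> carrier_vec (2*n)" using x by simp
  have dimF: "dim_vec (gradF M ?G0 (Jc n x) (cvec x) ?c (Gam n)) = 2*n"
    unfolding gradF_def using M cG by simp
  show ?thesis
  proof (rule eq_vecI)
    show "dim_vec (grad (2*n) (Qtilde n M eps) x) = dim_vec (gradF M ?G0 (Jc n x) (cvec x) ?c (Gam n))"
      unfolding dimF grad_def by simp
    fix i assume "i < dim_vec (gradF M ?G0 (Jc n x) (cvec x) ?c (Gam n))"
    then have i: "i < 2*n" using dimF by simp
    let ?e = "unit_vec (2*n) i :: real vec"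
    have e: "?e \<in> carrier_vec (2*n)" by simp
    have d: "((\<lambda>t. Qtilde n M eps (x + t \<cdot>\<^sub>v ?e)) has_vector_derivative
      (unit_vec (2*n) i \<bullet> ((M * ?G0) *\<^sub>v cvec x)
       + cvec x \<bullet> ((M * (- (?G0 * (0\<^sub>m (2*n) (2*n) - ?c \<cdot>\<^sub>m
            ((Jc n ?e * M) * (Jc n x * M) + (Jc n x * M) * (Jc n ?e * M))) * ?G0))) *\<^sub>v cvec x)
       + cvec x \<bullet> ((M * ?G0) *\<^sub>v unit_vec (2*n) i))) (at 0)"
      using pd_main[OF M x e inv] unfolding cvec_unit .
    have pd: "pderiv_at (2*n) (Qtilde n M eps) x i =
      (unit_vec (2*n) i \<bullet> ((M * ?G0) *\<^sub>v cvec x)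
       + cvec x \<bullet> ((M * (- (?G0 * (0\<^sub>m (2*n) (2*n) - ?c \<cdot>\<^sub>m
            ((Jc n ?e * M) * (Jc n x * M) + (Jc n x * M) * (Jc n ?e * M))) * ?G0))) *\<^sub>v cvec x)
       + cvec x \<bullet> ((M * ?G0) *\<^sub>v unit_vec (2*n) i))"
      unfolding pderiv_at_def
      apply (rule the_equality)
       apply (rule d)
      by (rule vd_unique[OF _ d])
    also have "\<dots> = ((M * ?G0) *\<^sub>v cvec x) $ i + (transpose_mat (M * ?G0) *\<^sub>v cvec x) $ i
       + ?c * ((transpose_mat (M * ?G0) *\<^sub>v cvec x) \<bullet> (Jc n ?e *\<^sub>v ((M * Jc n x * M * ?G0) *\<^sub>v cvec x))
             + (transpose_mat (M * ?G0 * Jc n x * M) *\<^sub>v cvec x) \<bullet> (Jc n ?e *\<^sub>v ((M * ?G0) *\<^sub>v cvec x)))"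
      by (rule val_eq[OF M cG Jc_carrier Jc_carrier cX i])
    also have "\<dots> = gradF M ?G0 (Jc n x) (cvec x) ?c (Gam n) $ i"
      unfolding gradF_def Gam_def using i M cG cX by simp
    finally show "grad (2*n) (Qtilde n M eps) x $ i = gradF M ?G0 (Jc n x) (cvec x) ?c (Gam n) $ i"
      unfolding grad_def using i by simp
  qed
qed



lemma map_minus_smult: assumes A: "A \<in> carrier_mat N N" and B: "B \<in> carrier_mat N N"
  shows "map_mat complex_of_real (A - r \<cdot>\<^sub>m B) = map_mat complex_of_real A - complex_of_real r \<cdot>\<^sub>m map_mat complex_of_real B"
  by (rule eq_matI) (use A B in auto)

lemma tr_mult_sq: "A \<in> carrier_mat N N \<Longrightarrow> B \<in> carrier_mat N N \<Longrightarrow> transpose_mat (A * B) = transpose_mat B * transpose_mat (A :: complex mat)"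
  by (rule transpose_mult)

theorem mainTheorem5:
  fixes n :: nat and H :: "real mat" and \<alpha> :: "nat \<Rightarrow> complex"
    and eps :: real and x :: "real vec"
  assumes n2: "n \<ge> 2"
    and Hdim: "H \<in> carrier_mat (2*n) (2*n)"
    and Hsym: "transpose_mat H = H"
    and Hadm: "Amat n * H = H * transpose_mat (Amat n)"
    and Bsq: "Bmat n \<alpha> * Bmat n \<alpha> = 1\<^sub>m (2*n)"
    and xdim: "x \<in> carrier_vec (2*n)"
    and invH: "invertible_mat (Dmat n (map_mat complex_of_real H) eps x)"
    and invK: "invertible_mat (Dmat n (Bmat n \<alpha> * map_mat complex_of_real H) eps x)"
  shows "bracket (2*n) (Jc n x)
           (Qtilde n (map_mat complex_of_real H) eps)
           (Qtilde n (Bmat n \<alpha> * map_mat complex_of_real H) eps) x = 0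
       \<and> bracket (2*n) (Pimat n H eps x)
           (Qtilde n (map_mat complex_of_real H) eps)
           (Qtilde n (Bmat n \<alpha> * map_mat complex_of_real H) eps) x = 0"
proof -
  let ?N = "2*n"
  let ?Hc = "map_mat complex_of_real H" and ?B = "Bmat n \<alpha>" and ?BT = "transpose_mat (Bmat n \<alpha>)"
  let ?K = "?B * ?Hc"
  let ?J0 = "Jc n x" and ?X = "cvec x" and ?c = "complex_of_real (eps^2)"
  have cHc: "?Hc \<in> carrier_mat ?N ?N" using Hdim by simp
  have cB: "?B \<in> carrier_mat ?N ?N" by simp
  have cBT: "?BT \<in> carrier_mat ?N ?N" by simp
  have cJ0: "?J0 \<in> carrier_mat ?N ?N" by simp
  have cK: "?K \<in> carrier_mat ?N ?N" using cB cHc by simp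
  have cX: "?X \<in> carrier_vec ?N" using xdim by simp
  have HcT: "transpose_mat ?Hc = ?Hc" using Hsym by (simp add: map_mat_transpose)
  have BH: "?B * ?Hc = ?Hc * ?BT" by (rule B_H[OF Hdim Hadm])
  have BTH: "?BT * ?Hc = ?Hc * ?B" by (rule BT_H[OF Hdim Hadm])
  have BTJ: "?BT * ?J0 = ?J0 * ?B" by (rule BT_J)
  have BH': "\<And>Z. Z \<in> carrier_mat ?N ?N \<Longrightarrow> ?B * (?Hc * Z) = ?Hc * (?BT * Z)"
  proof -
    fix Z :: "complex mat" assume Z: "Z \<in> carrier_mat ?N ?N"
    show "?B * (?Hc * Z) = ?Hc * (?BT * Z)"
      using assoc_mult_mat[OF cB cHc Z] assoc_mult_mat[OF cHc cBT Z] BH by simp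
  qed
  have BTH': "\<And>Z. Z \<in> carrier_mat ?N ?N \<Longrightarrow> ?BT * (?Hc * Z) = ?Hc * (?B * Z)"
  proof -
    fix Z :: "complex mat" assume Z: "Z \<in> carrier_mat ?N ?N"
    show "?BT * (?Hc * Z) = ?Hc * (?B * Z)"
      using assoc_mult_mat[OF cBT cHc Z] assoc_mult_mat[OF cHc cB Z] BTH by simp
  qed
  have BTJ': "\<And>Z. Z \<in> carrier_mat ?N ?N \<Longrightarrow> ?BT * (?J0 * Z) = ?J0 * (?B * Z)"
  proof -
    fix Z :: "complex mat" assume Z: "Z \<in> carrier_mat ?N ?N"
    show "?BT * (?J0 * Z) = ?J0 * (?B * Z)"
      using assoc_mult_mat[OF cBT cJ0 Z] assoc_mult_mat[OF cJ0 cB Z] BTJ by simp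
  qed
  have BB': "\<And>Z. Z \<in> carrier_mat ?N ?N \<Longrightarrow> ?B * (?B * Z) = Z"
  proof -
    fix Z :: "complex mat" assume Z: "Z \<in> carrier_mat ?N ?N"
    show "?B * (?B * Z) = Z"
      using assoc_mult_mat[OF cB cB Z] Bsq Z by simp
  qed
  have DKH: "Dmat n ?K eps x = Dmat n ?Hc eps x"
    unfolding Dmat_def using cB cHc cJ0 by (simp add: sq_rules[where N="?N"] BH' BTJ' BB')
  let ?D = "Dmat n ?Hc eps x"
  let ?G0 = "minv ?D"
  have cD: "?D \<in> carrier_mat ?N ?N" by (rule Dmat_carrier[OF cHc])
  have cG0: "?G0 \<in> carrier_mat ?N ?N" and DG: "?D * ?G0 = 1\<^sub>m ?N" and GD: "?G0 * ?D = 1\<^sub>m ?N"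
    using minv_carrier[OF cD invH] by auto
  have BTD: "?BT * ?D = ?D * ?BT"
    unfolding Dmat_def using cB cBT cHc cJ0 by (simp add: sq_rules[where N="?N"] BTJ' BH' BH right_mult_one_mat[OF cBT] left_mult_one_mat[OF cBT])
  have GB: "?G0 * ?BT = ?BT * ?G0"
  proof -
    have "?G0 * ?BT = ?G0 * (?BT * (?D * ?G0))" using DG right_mult_one_mat[OF cBT] by simp
    also have "\<dots> = ?G0 * ((?BT * ?D) * ?G0)" using cBT cD cG0 by (simp add: sq_rules[where N="?N"])
    also have "\<dots> = ?G0 * ((?D * ?BT) * ?G0)" by (simp add: BTD)
    also have "\<dots> = (?G0 * ?D) * (?BT * ?G0)" using cBT cD cG0 by (simp add: sq_rules[where N="?N"])
    also have "\<dots> = ?BT * ?G0" using GD left_mult_one_mat[OF sq_mm_carrier[OF cBT cG0]] by simp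
    finally show ?thesis .
  qed
  have gH: "grad ?N (Qtilde n ?Hc eps) x = gradF ?Hc ?G0 ?J0 ?X ?c (Gam n)"
    by (rule grad_formula[OF cHc xdim invH])
  have gK: "grad ?N (Qtilde n ?K eps) x = gradF ?K ?G0 ?J0 ?X ?c (Gam n)"
    using grad_formula[OF cK xdim invK] unfolding DKH .
  have rel: "gradF ?K ?G0 ?J0 ?X ?c (Gam n) = ?B *\<^sub>v gradF ?Hc ?G0 ?J0 ?X ?c (Gam n)"
    by (rule grad_rel[OF cB cBT cHc cJ0 cG0 cX refl BH BTJ Bsq GB])
      (auto simp: Gam_B_right Gam_B_left)
  let ?g = "gradF ?Hc ?G0 ?J0 ?X ?c (Gam n)"
  have cg: "?g \<in> carrier_vec ?N" using gH unfolding grad_def by (metis vec_carrier)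
  have b1: "bracket ?N ?J0 (Qtilde n ?Hc eps) (Qtilde n ?K eps) x = 0"
    unfolding bracket_def gH gK rel
    by (rule bracket_zero_gen[OF cJ0 cB cBT Jc_transpose refl BTJ cg])
  let ?Y = "?J0 * (?Hc * (?J0 * (?Hc * ?J0)))"
  have cY: "?Y \<in> carrier_mat ?N ?N" using cJ0 cHc by simp
  have Peq: "Pimat n H eps x = ?J0 - ?c \<cdot>\<^sub>m ?Y"
  proof -
    have Jd: "Jmat n x \<in> carrier_mat ?N ?N" by simp
    have m1: "map_mat complex_of_real (Jmat n x * H * Jmat n x * H * Jmat n x) = ?J0 * ?Hc * ?J0 * ?Hc * ?J0"
      using Jd Hdim unfolding Jc_def
      by (simp add: of_real_hom.mat_hom_mult[where nr="?N" and n="?N" and nc="?N"])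
    have cp: "Jmat n x * H * Jmat n x * H * Jmat n x \<in> carrier_mat ?N ?N" using Jd Hdim by simp
    have "Pimat n H eps x = map_mat complex_of_real (Jmat n x - (eps^2) \<cdot>\<^sub>m (Jmat n x * H * Jmat n x * H * Jmat n x))"
      by (simp only: Pimat_def)
    also have "\<dots> = map_mat complex_of_real (Jmat n x) - ?c \<cdot>\<^sub>m map_mat complex_of_real (Jmat n x * H * Jmat n x * H * Jmat n x)"
      by (rule map_minus_smult[OF Jd cp])
    also have "\<dots> = ?J0 - ?c \<cdot>\<^sub>m (?J0 * ?Hc * ?J0 * ?Hc * ?J0)"
      by (simp only: m1 Jc_def)
    also have "\<dots> = ?J0 - ?c \<cdot>\<^sub>m ?Y" using cJ0 cHc by (simp add: sq_rules[where N="?N"])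
    finally show ?thesis .
  qed
  have cP: "Pimat n H eps x \<in> carrier_mat ?N ?N" unfolding Peq using cJ0 cY by (simp add: minus_carrier_mat)
  have YT: "transpose_mat ?Y = - ?Y"
    using cJ0 cHc by (simp add: tr_mult_sq[where N="?N"] Jc_transpose HcT sq_rules[where N="?N"])
  have PT: "transpose_mat (Pimat n H eps x) = - Pimat n H eps x"
  proof -
    have "transpose_mat (Pimat n H eps x) = transpose_mat ?J0 - ?c \<cdot>\<^sub>m transpose_mat ?Y"
      unfolding Peq using transpose_minus[of ?J0 ?N ?N "?c \<cdot>\<^sub>m ?Y"] cJ0 cY by (simp add: transpose_smult)
    also have "\<dots> = - Pimat n H eps x"
      unfolding Peq YT Jc_transpose by (rule eq_matI) (use cJ0 cY in auto)
    finally show ?thesis .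
  qed
  have BTP: "?BT * Pimat n H eps x = Pimat n H eps x * ?B"
    unfolding Peq using cB cBT cHc cJ0 by (simp add: sq_rules[where N="?N"] BTJ' BH' BTH' BTJ)
  have b2: "bracket ?N (Pimat n H eps x) (Qtilde n ?Hc eps) (Qtilde n ?K eps) x = 0"
    unfolding bracket_def gH gK rel
    by (rule bracket_zero_gen[OF cP cB cBT PT refl BTP cg])
  show ?thesis using b1 b2 by simp
qed


end
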